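(* For Dyck paths $\lambda_1,\lambda_2$ and integers $a,b\ge0$, \[ B_q(\lambda_1*\lambda_2; a,b) = \sum_{i\ge0} B_q(\lambda_1; a,i)\, B_q(\lambda_2; i,b). \]
   Context: A Dyck path of length $2n$ is a lattice path from $(0,0)$ to $(n,n)$ with up steps $(0,1)$ and down steps $(1,0)$ never going below $y=x$; $\mathrm{Dyck}(2n)$ is their set. For lattice paths $\nu,\rho$, $\nu*\rho$ is obtained by translating $\rho$ to start at the endpoint of $\nu$ and concatenating. For $\lambda\in\mathrm{Dyck}(2n)$ and integers $a,b\ge0$, let $O=(0,0)$, $N=(n,n)$, $A=O+(-a,a)$, $B=N+(-b,b)$, and $L(\lambda;a,b)$ the set of lattice paths with steps $(0,1),(1,0)$ from $A$ to $B$ never going below $\lambda$. For $\mu\in L(\lambda;a,b)$, $\lambda/\mu$ is the region bounded by $\lambda$, $\mu$ and segments $OA$, $NB$; $|\lambda/\mu|$ is its area. A Dyck tile is an edge-connected set of unit cells with no $2\times2$ block whose cell centers, joined by unit up/right moves, form a translated Dyck path; its length is the length of that path. A truncated Dyck tile is obtained from a Dyck tile of positive length by cutting its northeast and southwest cells along their diagonals of slope $-1$ and removing the northeast half of the northeast cell and the southwest half of the southwest cell; its half-length is half the length of the original Dyck tile. A truncated Dyck tiling of $\lambda/\mu$ is a set $T$ of truncated Dyck tiles with disjoint interiors contained in $\lambda/\mu$ such that (i) for each $\eta\in T$, if $(\eta+(1,-1))\cap\lambda/\mu$ has nonempty interior then another tile of $T$ contains $\eta+(1,-1)$, and (ii)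 no two tiles share a border segment of slope $-1$. $\mathcal{TD}(\lambda/\mu)$ is their set; $\|T\|$ is the sum of half-lengths of its tiles. $B_q(\lambda;a,b)=\sum_{\mu\in L(\lambda;a,b)}\sum_{T\in\mathcal{TD}(\lambda/\mu)} q^{|\lambda/\mu|-\|T\|}$. *)

theory Defs
  imports Main "HOL-Library.Groups_Big_Fun"
begin

(* A lattice path is a list of steps: True = up step (0,1), False = down step (1,0).
   We work in the rotated coordinates u = x + y, v = y - x.  Every step increases u by 1
   and changes v by +1 (up) or -1 (down).  *)

definition vh :: "int \<Rightarrow> bool list \<Rightarrow> nat \<Rightarrow> int" where
  "vh v0 ws j = v0 + sum_list (map (\<lambda>s. if s then 1 else -1) (take j ws))"

(* Dyck path (of length 2n for n = length/2): never goes below y = x, ends on y = x *)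
definition dyck :: "bool list \<Rightarrow> bool" where
  "dyck ws \<longleftrightarrow> (\<forall>j \<le> length ws. 0 \<le> vh 0 ws j) \<and> vh 0 ws (length ws) = 0"

(* L(lam;a,b): paths from A=(-a,a) (u=0, v=2a) to B=(n-b,n+b) (u=2n, v=2b),
   2n = length lam, never going below lam (pointwise in v over the common u-range). *)
definition Lpaths :: "bool list \<Rightarrow> nat \<Rightarrow> nat \<Rightarrow> bool list set" where
  "Lpaths lam a b = {mu. length mu = length lam \<and> vh (2 * int a) mu (length mu) = 2 * int b
      \<and> (\<forall>j \<le> length lam. vh 0 lam j \<le> vh (2 * int a) mu j)}"

(* Each unit cell, cut along its slope -1 diagonal, gives two triangles.
   In rotated coordinates the strip k \<le> u \<le> k+1 is cut into triangles indexed by their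
   middle height v; (k,v) denotes the triangle of that strip occupying v-1 < . < v+1
   at the vertical side.  The cell with lower-left corner (x,y) has centre
   (u,v) = (x+y+1, y-x) and consists of the SW half (x+y, y-x) and the NE half (x+y+1, y-x). *)

(* The region lam/mu as a set of half-cells (its area is card/2). *)
definition region :: "bool list \<Rightarrow> bool list \<Rightarrow> nat \<Rightarrow> (int \<times> int) set" where
  "region lam mu a = {(k, v). 0 \<le> k \<and> k < int (length lam)
      \<and> min (vh 0 lam (nat k)) (vh 0 lam (nat k + 1)) < v
      \<and> v < max (vh (2 * int a) mu (nat k)) (vh (2 * int a) mu (nat k + 1))}"

(* Truncated Dyck tile from the Dyck tile whose SW cell has lower-left corner (x,y)
   and whose cell centres follow the Dyck word ws (nonempty): all cells of the tile,
   minus the SW half of the SW cell and the NE half of the NE cell. *)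
definition trunc_tile :: "int \<Rightarrow> int \<Rightarrow> bool list \<Rightarrow> (int \<times> int) set" where
  "trunc_tile x y ws =
     {(x + y + 1 + int j, vh (y - x) ws j) | j. j < length ws}
   \<union> {(x + y + 1 + int j, vh (y - x) ws (Suc j)) | j. j < length ws}"

definition is_trunc_tile :: "(int \<times> int) set \<Rightarrow> bool" where
  "is_trunc_tile S \<longleftrightarrow> (\<exists>x y ws. dyck ws \<and> ws \<noteq> [] \<and> S = trunc_tile x y ws)"

definition halflen :: "(int \<times> int) set \<Rightarrow> nat" where
  "halflen S = (THE k. \<exists>x y ws. dyck ws \<and> ws \<noteq> [] \<and> length ws = 2 * k \<and> S = trunc_tile x y ws)"

(* translation by (1,-1): u unchanged, v decreased by 2 *)
definition shift :: "(int \<times> int) set \<Rightarrow> (int \<times> int) set" where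
  "shift S = (\<lambda>(k, v). (k, v - 2)) ` S"

(* The slope -1 unit segment at u (from v-1 to v+1), u+v odd, separates half-cells
   (u-1,v) and (u,v); it is a border segment of S iff exactly one of them lies in S. *)
definition border :: "(int \<times> int) set \<Rightarrow> int \<Rightarrow> int \<Rightarrow> bool" where
  "border S u v \<longleftrightarrow> odd (u + v) \<and> (((u - 1, v) \<in> S) \<noteq> ((u, v) \<in> S))"

definition TD :: "bool list \<Rightarrow> bool list \<Rightarrow> nat \<Rightarrow> (int \<times> int) set set set" where
  "TD lam mu a = {T. (\<forall>\<eta>\<in>T. is_trunc_tile \<eta> \<and> \<eta> \<subseteq> region lam mu a)
     \<and> (\<forall>\<eta>1\<in>T. \<forall>\<eta>2\<in>T. \<eta>1 \<noteq> \<eta>2 \<longrightarrow> \<eta>1 \<inter> \<eta>2 = {})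
     \<and> (\<forall>\<eta>\<in>T. shift \<eta> \<inter> region lam mu a \<noteq> {} \<longrightarrow> (\<exists>\<eta>'\<in>T. \<eta>' \<noteq> \<eta> \<and> shift \<eta> \<subseteq> \<eta>'))
     \<and> (\<forall>\<eta>1\<in>T. \<forall>\<eta>2\<in>T. \<eta>1 \<noteq> \<eta>2 \<longrightarrow> \<not> (\<exists>u v. border \<eta>1 u v \<and> border \<eta>2 u v))}"

(* B_q(lam;a,b) written in the variable t = q^(1/2):
   q^(|lam/mu| - ||T||) = t^(#half-cells - 2 ||T||). *)
definition Bq :: "'a::comm_semiring_1 \<Rightarrow> bool list \<Rightarrow> nat \<Rightarrow> nat \<Rightarrow> 'a" where
  "Bq t lam a b = (\<Sum>mu\<in>Lpaths lam a b. \<Sum>T\<in>TD lam mu a.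
      t ^ (card (region lam mu a) - 2 * (\<Sum>\<eta>\<in>T. halflen \<eta>)))"

end

theory Submission
  imports Defs
begin

lemma vh_0[simp]: "vh v0 ws 0 = v0" by (simp add: vh_def)

lemma vh_Suc: "j < length ws \<Longrightarrow> vh v0 ws (Suc j) = vh v0 ws j + (if ws!j then 1 else -1)"
  by (simp add: vh_def take_Suc_conv_app_nth)

lemma vh_ge: "length ws \<le> j \<Longrightarrow> vh v0 ws j = vh v0 ws (length ws)"
  by (simp add: vh_def)

lemma vh_base: "vh v0 ws j = v0 + vh 0 ws j" by (simp add: vh_def)

lemma vh_append: "vh v0 (xs@ys) j = (if j \<le> length xs then vh v0 xs j else vh (vh v0 xs (length xs)) ys (j - length xs))"
  by (simp add: vh_def)

lemma vh_append_le: "j \<le> length xs \<Longrightarrow> vh v0 (xs@ys) j = vh v0 xs j"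
  by (simp add: vh_append)

lemma vh_append_ge: "vh v0 (xs@ys) (length xs + j) = vh (vh v0 xs (length xs)) ys j"
  by (simp add: vh_def)

lemma vh_take: "j \<le> m \<Longrightarrow> vh v0 (take m ws) j = vh v0 ws j"
  by (simp add: vh_def min_def)

lemma vh_drop: "m \<le> length ws \<Longrightarrow> vh (vh v0 ws m) (drop m ws) j = vh v0 ws (m + j)"
proof -
  assume m: "m \<le> length ws"
  have "vh v0 (take m ws @ drop m ws) (length (take m ws) + j) = vh (vh v0 (take m ws) (length (take m ws))) (drop m ws) j"
    by (rule vh_append_ge)
  thus ?thesis using m by (cases "m = length ws") (auto simp: vh_take min_def)
qed

lemma vh_step: "j < length ws \<Longrightarrow> vh v0 ws (Suc j) = vh v0 ws j + 1 \<or> vh v0 ws (Suc j) = vh v0 ws j - 1"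
  by (simp add: vh_Suc)

lemma vh_parity: "j \<le> length ws \<Longrightarrow> even (vh v0 ws j - v0 - int j)"
proof (induction j)
  case 0 then show ?case by simp
next
  case (Suc j)
  then have "even (vh v0 ws j - v0 - int j)" by simp
  then show ?case using Suc.prems by (auto simp: vh_Suc)
qed

lemma vh_shift_base: "vh (v0 + d) ws j = vh v0 ws j + d" by (simp add: vh_def)

lemma dyck_nonneg: "dyck ws \<Longrightarrow> 0 \<le> vh 0 ws j"
  unfolding dyck_def
  by (metis nle_le vh_ge)

lemma dyck_end: "dyck ws \<Longrightarrow> vh 0 ws (length ws) = 0" by (simp add: dyck_def)

lemma dyck_even: "dyck ws \<Longrightarrow> even (length ws)"
  using vh_parity[of "length ws" ws 0] dyck_end[of ws] by simp

lemma dyck_append: "dyck xs \<Longrightarrow> dyck ys \<Longrightarrow> dyck (xs@ys)"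
  unfolding dyck_def
  by (auto simp: vh_append)

lemma dyck_take: "dyck ws \<Longrightarrow> m \<le> length ws \<Longrightarrow> vh 0 ws m = 0 \<Longrightarrow> dyck (take m ws)"
  unfolding dyck_def by (auto simp: vh_take min_def)

lemma dyck_drop: "dyck ws \<Longrightarrow> m \<le> length ws \<Longrightarrow> vh 0 ws m = 0 \<Longrightarrow> dyck (drop m ws)"
proof -
  assume d: "dyck ws" and m: "m \<le> length ws" and z: "vh 0 ws m = 0"
  have e: "vh 0 (drop m ws) j = vh 0 ws (m + j)" for j using vh_drop[OF m, of 0 j] z by simp
  show ?thesis unfolding dyck_def using d m by (auto simp: e dyck_nonneg dyck_end)
qed

definition tt :: "int \<Rightarrow> int \<Rightarrow> bool list \<Rightarrow> (int \<times> int) set" where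
  "tt k0 v0 ws = {(k0 + int j, vh v0 ws j) | j. j < length ws}
              \<union> {(k0 + int j, vh v0 ws (Suc j)) | j. j < length ws}"

lemma trunc_tile_tt: "trunc_tile x y ws = tt (x + y + 1) (y - x) ws"
  unfolding trunc_tile_def tt_def by (simp add: add.assoc)

lemma mem_tt: "(k, v) \<in> tt k0 v0 ws \<longleftrightarrow> k0 \<le> k \<and> k < k0 + int (length ws) \<and>
   (v = vh v0 ws (nat (k - k0)) \<or> v = vh v0 ws (Suc (nat (k - k0))))"
proof
  assume "(k, v) \<in> tt k0 v0 ws"
  then show "k0 \<le> k \<and> k < k0 + int (length ws) \<and> (v = vh v0 ws (nat (k - k0)) \<or> v = vh v0 ws (Suc (nat (k - k0))))"
    unfolding tt_def by auto
next
  assume h: "k0 \<le> k \<and> k < k0 + int (length ws) \<and> (v = vh v0 ws (nat (k - k0)) \<or> v = vh v0 ws (Suc (nat (k - k0))))"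
  define j where "j = nat (k - k0)"
  have k: "k = k0 + int j" "j < length ws" using h unfolding j_def by auto
  show "(k, v) \<in> tt k0 v0 ws" using h k unfolding tt_def j_def[symmetric] by auto
qed

lemma tt_NE:
  assumes "odd (k0 + v0)" "odd (k + v)"
  shows "(k, v) \<in> tt k0 v0 ws \<longleftrightarrow> k0 \<le> k \<and> k < k0 + int (length ws) \<and> v = vh v0 ws (nat (k - k0))"
proof -
  have "v \<noteq> vh v0 ws (Suc (nat (k - k0)))" if "k0 \<le> k" "k < k0 + int (length ws)"
  proof
    assume e: "v = vh v0 ws (Suc (nat (k - k0)))"
    define m where "m = nat (k - k0)"
    have m: "k = k0 + int m" "nat (k - k0) = m" using that unfolding m_def by auto
    have "even (vh v0 ws (Suc (nat (k - k0))) - v0 - int (Suc (nat (k - k0))))"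
      by (rule vh_parity) (use that in linarith)
    then have "even (v - v0 - int (Suc m))" using e m by simp
    then show False using assms m(1) by presburger
  qed
  then show ?thesis unfolding mem_tt by auto
qed

lemma tt_SW:
  assumes "odd (k0 + v0)" "even (k + v)"
  shows "(k, v) \<in> tt k0 v0 ws \<longleftrightarrow> k0 \<le> k \<and> k < k0 + int (length ws) \<and> v = vh v0 ws (Suc (nat (k - k0)))"
proof -
  have "v \<noteq> vh v0 ws (nat (k - k0))" if "k0 \<le> k" "k < k0 + int (length ws)"
  proof
    assume e: "v = vh v0 ws (nat (k - k0))"
    define m where "m = nat (k - k0)"
    have m: "k = k0 + int m" "nat (k - k0) = m" using that unfolding m_def by auto
    have "even (vh v0 ws (nat (k - k0)) - v0 - int (nat (k - k0)))"
      by (rule vh_parity) (use that in linarith)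
    then have "even (v - v0 - int m)" using e m by simp
    then show False using assms m(1) by presburger
  qed
  then show ?thesis unfolding mem_tt by auto
qed

lemma tt_append: "tt k0 v0 (xs @ ys) = tt k0 v0 xs \<union> tt (k0 + int (length xs)) (vh v0 xs (length xs)) ys"
proof (rule set_eqI, clarify)
  fix k v
  show "(k, v) \<in> tt k0 v0 (xs @ ys) \<longleftrightarrow> (k, v) \<in> tt k0 v0 xs \<union> tt (k0 + int (length xs)) (vh v0 xs (length xs)) ys"
  proof (cases "k < k0 + int (length xs)")
    case True
    then show ?thesis unfolding Un_iff mem_tt by (auto simp: vh_append)
  next
    case False
    define n where "n = nat (k - (k0 + int (length xs)))"
    have e: "nat (k - k0) = length xs + n" "Suc (nat (k - k0)) = length xs + Suc n" using False unfolding n_def by auto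
    have "(k, v) \<in> tt k0 v0 (xs @ ys) \<longleftrightarrow> k < k0 + int (length xs) + int (length ys) \<and>
       (v = vh (vh v0 xs (length xs)) ys n \<or> v = vh (vh v0 xs (length xs)) ys (Suc n))"
    proof -
      have e3: "vh v0 (xs@ys) (Suc (length xs + n)) = vh (vh v0 xs (length xs)) ys (Suc n)"
        using vh_append_ge[of v0 xs ys "Suc n"] by simp
      show ?thesis unfolding mem_tt e(1) vh_append_ge using False e3 by auto
    qed
    moreover have "(k, v) \<in> tt (k0 + int (length xs)) (vh v0 xs (length xs)) ys \<longleftrightarrow> k < k0 + int (length xs) + int (length ys) \<and>
       (v = vh (vh v0 xs (length xs)) ys n \<or> v = vh (vh v0 xs (length xs)) ys (Suc n))"
      unfolding mem_tt n_def using False by auto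
    moreover have "(k, v) \<notin> tt k0 v0 xs" unfolding mem_tt using False by auto
    ultimately show ?thesis by auto
  qed
qed

lemma tt_img: "tt k0 v0 ws = (\<lambda>j. (k0 + int j, vh v0 ws j)) ` {..<length ws} \<union> (\<lambda>j. (k0 + int j, vh v0 ws (Suc j))) ` {..<length ws}"
  unfolding tt_def by (simp only: setcompr_eq_image lessThan_def)

lemma finite_tt: "finite (tt k0 v0 ws)"
  unfolding tt_img by blast

lemma card_tt: "card (tt k0 v0 ws) = 2 * length ws"
proof -
  let ?A = "(\<lambda>j. (k0 + int j, vh v0 ws j)) ` {..<length ws}"
  let ?B = "(\<lambda>j. (k0 + int j, vh v0 ws (Suc j))) ` {..<length ws}"
  have d: "?A \<inter> ?B = {}"
  proof (rule ccontr)
    assume "?A \<inter> ?B \<noteq> {}"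
    then obtain j j' where j: "j < length ws" "(k0 + int j, vh v0 ws j) = (k0 + int j', vh v0 ws (Suc j'))" by blast
    then have "j = j'" "vh v0 ws j = vh v0 ws (Suc j)" by auto
    then show False using vh_step[OF j(1), of v0] by auto
  qed
  have "card ?A = length ws" by (subst card_image) (auto simp: inj_on_def)
  moreover have "card ?B = length ws" by (subst card_image) (auto simp: inj_on_def)
  ultimately show ?thesis unfolding tt_img by (subst card_Un_disjoint) (use d in auto)
qed

lemma tt_empty_iff: "tt k0 v0 ws = {} \<longleftrightarrow> ws = []"
  unfolding tt_img by auto

lemma tt_ge: "dyck ws \<Longrightarrow> (k, v) \<in> tt k0 v0 ws \<Longrightarrow> v0 \<le> v"
  unfolding mem_tt using dyck_nonneg[of ws] by (auto simp: vh_base[of v0])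

definition trs :: "int \<Rightarrow> (int \<times> int) set \<Rightarrow> (int \<times> int) set" where
  "trs d S = (\<lambda>(k, v). (k + d, v)) ` S"

lemma mem_trs: "(k, v) \<in> trs d S \<longleftrightarrow> (k - d, v) \<in> S"
proof
  assume "(k, v) \<in> trs d S" then show "(k - d, v) \<in> S" unfolding trs_def by auto
next
  assume "(k - d, v) \<in> S" then have "(\<lambda>(k, v). (k + d, v)) (k - d, v) \<in> trs d S" unfolding trs_def by (rule imageI)
  then show "(k, v) \<in> trs d S" by simp
qed

lemma trs_tt: "trs d (tt k0 v0 ws) = tt (k0 + d) v0 ws"
  by (rule set_eqI, clarify) (auto simp: mem_trs mem_tt algebra_simps)

lemma mem_shift: "(k, v) \<in> shift S \<longleftrightarrow> (k, v + 2) \<in> S"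
proof
  assume "(k, v) \<in> shift S" then show "(k, v + 2) \<in> S" unfolding shift_def by auto
next
  assume "(k, v + 2) \<in> S" then have "(\<lambda>(k, v). (k, v - 2)) (k, v + 2) \<in> shift S" unfolding shift_def by (rule imageI)
  then show "(k, v) \<in> shift S" by simp
qed

lemma shift_tt: "shift (tt k0 v0 ws) = tt k0 (v0 - 2) ws"
proof -
  have "vh v0 ws j = vh (v0 - 2) ws j + 2" for j using vh_shift_base[of "v0-2" 2 ws j] by simp
  then show ?thesis by (intro set_eqI, clarify) (auto simp: mem_shift mem_tt)
qed

lemma is_trunc_tile_tt: "is_trunc_tile S \<longleftrightarrow> (\<exists>k0 v0 ws. odd (k0 + v0) \<and> dyck ws \<and> ws \<noteq> [] \<and> S = tt k0 v0 ws)"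
proof
  assume "is_trunc_tile S"
  then obtain x y ws where "dyck ws" "ws \<noteq> []" "S = tt (x + y + 1) (y - x) ws"
    unfolding is_trunc_tile_def trunc_tile_tt by blast
  moreover have "odd ((x + y + 1) + (y - x))" by presburger
  ultimately show "\<exists>k0 v0 ws. odd (k0 + v0) \<and> dyck ws \<and> ws \<noteq> [] \<and> S = tt k0 v0 ws" by blast
next
  assume "\<exists>k0 v0 ws. odd (k0 + v0) \<and> dyck ws \<and> ws \<noteq> [] \<and> S = tt k0 v0 ws"
  then obtain k0 v0 ws where h: "odd (k0 + v0)" "dyck ws" "ws \<noteq> []" "S = tt k0 v0 ws" by blast
  define x where "x = (k0 - v0 - 1) div 2"
  define y where "y = (k0 + v0 - 1) div 2"
  have "x + y + 1 = k0" "y - x = v0" unfolding x_def y_def using h(1) by presburger+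
  then have "S = trunc_tile x y ws" using h(4) by (simp add: trunc_tile_tt)
  then show "is_trunc_tile S" unfolding is_trunc_tile_def using h by blast
qed

lemma halflen_tt: "is_trunc_tile S \<Longrightarrow> 4 * halflen S = card S"
proof -
  assume "is_trunc_tile S"
  then obtain x y ws where h: "dyck ws" "ws \<noteq> []" "S = trunc_tile x y ws"
    unfolding is_trunc_tile_def by blast
  have c: "card S = 2 * length ws" using h(3) by (simp add: trunc_tile_tt card_tt)
  obtain k where k: "length ws = 2 * k" using dyck_even[OF h(1)] by blast
  have "halflen S = k"
    unfolding halflen_def
  proof (rule the_equality)
    show "\<exists>x y ws. dyck ws \<and> ws \<noteq> [] \<and> length ws = 2 * k \<and> S = trunc_tile x y ws" using h k by blast
  next
    fix k' assume "\<exists>x y ws. dyck ws \<and> ws \<noteq> [] \<and> length ws = 2 * k' \<and> S = trunc_tile x y ws"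
    then obtain x' y' ws' where "length ws' = 2 * k'" "S = trunc_tile x' y' ws'" by blast
    then have "card S = 4 * k'" by (simp add: trunc_tile_tt card_tt)
    then show "k' = k" using c k by simp
  qed
  then show ?thesis using c k by simp
qed

definition TDr :: "(int \<times> int) set \<Rightarrow> (int \<times> int) set set set" where
  "TDr R = {T. (\<forall>\<eta>\<in>T. is_trunc_tile \<eta> \<and> \<eta> \<subseteq> R)
     \<and> (\<forall>\<eta>1\<in>T. \<forall>\<eta>2\<in>T. \<eta>1 \<noteq> \<eta>2 \<longrightarrow> \<eta>1 \<inter> \<eta>2 = {})
     \<and> (\<forall>\<eta>\<in>T. shift \<eta> \<inter> R \<noteq> {} \<longrightarrow> (\<exists>\<eta>'\<in>T. \<eta>' \<noteq> \<eta> \<and> shift \<eta> \<subseteq> \<eta>'))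
     \<and> (\<forall>\<eta>1\<in>T. \<forall>\<eta>2\<in>T. \<eta>1 \<noteq> \<eta>2 \<longrightarrow> \<not> (\<exists>u v. border \<eta>1 u v \<and> border \<eta>2 u v))}"

lemma TD_TDr: "TD lam mu a = TDr (region lam mu a)"
  unfolding TD_def TDr_def by (rule refl)

lemma TDr_D: "T \<in> TDr X \<Longrightarrow> (\<forall>\<eta>\<in>T. is_trunc_tile \<eta> \<and> \<eta> \<subseteq> X)
     \<and> (\<forall>\<eta>1\<in>T. \<forall>\<eta>2\<in>T. \<eta>1 \<noteq> \<eta>2 \<longrightarrow> \<eta>1 \<inter> \<eta>2 = {})
     \<and> (\<forall>\<eta>\<in>T. shift \<eta> \<inter> X \<noteq> {} \<longrightarrow> (\<exists>\<eta>'\<in>T. \<eta>' \<noteq> \<eta> \<and> shift \<eta> \<subseteq> \<eta>'))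
     \<and> (\<forall>\<eta>1\<in>T. \<forall>\<eta>2\<in>T. \<eta>1 \<noteq> \<eta>2 \<longrightarrow> \<not> (\<exists>u v. border \<eta>1 u v \<and> border \<eta>2 u v))"
  unfolding TDr_def by (rule CollectD)

lemma TDr_I: "(\<forall>\<eta>\<in>T. is_trunc_tile \<eta> \<and> \<eta> \<subseteq> X)
     \<Longrightarrow> (\<forall>\<eta>1\<in>T. \<forall>\<eta>2\<in>T. \<eta>1 \<noteq> \<eta>2 \<longrightarrow> \<eta>1 \<inter> \<eta>2 = {})
     \<Longrightarrow> (\<forall>\<eta>\<in>T. shift \<eta> \<inter> X \<noteq> {} \<longrightarrow> (\<exists>\<eta>'\<in>T. \<eta>' \<noteq> \<eta> \<and> shift \<eta> \<subseteq> \<eta>'))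
     \<Longrightarrow> (\<forall>\<eta>1\<in>T. \<forall>\<eta>2\<in>T. \<eta>1 \<noteq> \<eta>2 \<longrightarrow> \<not> (\<exists>u v. border \<eta>1 u v \<and> border \<eta>2 u v))
     \<Longrightarrow> T \<in> TDr X"
  unfolding TDr_def by (rule CollectI) (intro conjI)

lemma TDr_tile: "T \<in> TDr X \<Longrightarrow> \<eta> \<in> T \<Longrightarrow> is_trunc_tile \<eta>"
  using TDr_D by metis
lemma TDr_sub: "T \<in> TDr X \<Longrightarrow> \<eta> \<in> T \<Longrightarrow> \<eta> \<subseteq> X"
  using TDr_D by metis
lemma TDr_disj: "T \<in> TDr X \<Longrightarrow> \<eta>1 \<in> T \<Longrightarrow> \<eta>2 \<in> T \<Longrightarrow> \<eta>1 \<noteq> \<eta>2 \<Longrightarrow> \<eta>1 \<inter> \<eta>2 = {}"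
  using TDr_D by metis
lemma TDr_shift: "T \<in> TDr X \<Longrightarrow> \<eta> \<in> T \<Longrightarrow> shift \<eta> \<inter> X \<noteq> {} \<Longrightarrow> \<exists>\<eta>'\<in>T. \<eta>' \<noteq> \<eta> \<and> shift \<eta> \<subseteq> \<eta>'"
  using TDr_D by metis
lemma TDr_border: "T \<in> TDr X \<Longrightarrow> \<eta>1 \<in> T \<Longrightarrow> \<eta>2 \<in> T \<Longrightarrow> border \<eta>1 u v \<Longrightarrow> border \<eta>2 u v \<Longrightarrow> \<eta>1 = \<eta>2"
  using TDr_D by metis

lemma TDr_params: "T \<in> TDr X \<Longrightarrow> \<eta> \<in> T \<Longrightarrow> \<exists>k0 v0 ws. odd (k0 + v0) \<and> dyck ws \<and> ws \<noteq> [] \<and> \<eta> = tt k0 v0 ws"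
  using TDr_tile[of T X \<eta>] unfolding is_trunc_tile_tt by auto

lemma tile_nonempty: "is_trunc_tile S \<Longrightarrow> S \<noteq> {}"
  unfolding is_trunc_tile_tt by (auto simp: tt_empty_iff)

lemma TDr_adj: "T \<in> TDr X \<Longrightarrow> \<eta> \<in> T \<Longrightarrow> \<eta>' \<in> T \<Longrightarrow> odd (L + v) \<Longrightarrow> (L - 1, v) \<in> \<eta> \<Longrightarrow> (L, v) \<in> \<eta>' \<Longrightarrow> \<eta> = \<eta>'"
proof (rule ccontr)
  assume T: "T \<in> TDr X" and h: "\<eta> \<in> T" "\<eta>' \<in> T" "odd (L + v)" "(L - 1, v) \<in> \<eta>" "(L, v) \<in> \<eta>'" and ne: "\<eta> \<noteq> \<eta>'"
  have d: "\<eta> \<inter> \<eta>' = {}" using TDr_disj[OF T h(1,2) ne] .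
  then have "border \<eta> L v" "border \<eta>' L v" using h unfolding border_def by auto
  then show False using TDr_border[OF T h(1,2)] ne by blast
qed

locale cutR =
  fixes L :: int and R :: "(int \<times> int) set"
  assumes evenL: "even L"
    and pos: "\<And>k v. (k, v) \<in> R \<Longrightarrow> 1 \<le> v"
    and down1: "\<And>v v'. (L - 1, v) \<in> R \<Longrightarrow> 1 \<le> v' \<Longrightarrow> v' \<le> v \<Longrightarrow> (L - 1, v') \<in> R"
    and down2: "\<And>v v'. (L, v) \<in> R \<Longrightarrow> 1 \<le> v' \<Longrightarrow> v' \<le> v \<Longrightarrow> (L, v') \<in> R"
begin

lemma cross_aux:
  assumes T: "T \<in> TDr R"
  shows "nat (vh v0 ws (nat (L - k0))) = n \<Longrightarrow> \<eta> \<in> T \<Longrightarrow> \<eta> = tt k0 v0 ws \<Longrightarrow> odd (k0 + v0) \<Longrightarrow> dyck ws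
     \<Longrightarrow> k0 < L \<Longrightarrow> L < k0 + int (length ws) \<Longrightarrow> vh v0 ws (nat (L - k0)) = v0"
proof (induction n arbitrary: \<eta> k0 v0 ws rule: less_induct)
  case (less n)
  define m where "m = nat (L - k0)"
  define h where "h = vh v0 ws m"
  have Lm: "L = k0 + int m" "0 < m" "m < length ws" using less.prems unfolding m_def by auto
  have mem1: "(L - 1, h) \<in> \<eta>"
  proof -
    have "nat (L - 1 - k0) = m - 1" "Suc (m - 1) = m" using Lm by auto
    then show ?thesis unfolding less.prems(3) mem_tt h_def using Lm by auto
  qed
  have mem2: "(L, h) \<in> \<eta>" unfolding less.prems(3) mem_tt h_def using Lm m_def by auto
  have mem0: "(k0, v0) \<in> \<eta>" unfolding less.prems(3) mem_tt using Lm by auto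
  have sub: "\<eta> \<subseteq> R" using TDr_sub[OF T less.prems(2)] .
  have v0pos: "1 \<le> v0" using pos mem0 sub by blast
  have hge: "v0 \<le> h" unfolding h_def using dyck_nonneg[OF less.prems(5), of m] vh_base[of v0 ws m] by simp
  have par: "even (h - v0 - int m)" unfolding h_def by (rule vh_parity) (use Lm in simp)
  have oddh: "odd h" using par Lm(1) less.prems(4) evenL by presburger
  show ?case
  proof (cases "shift \<eta> \<inter> R = {}")
    case True
    have "(L - 1, h - 2) \<in> shift \<eta>" using mem1 by (simp add: mem_shift)
    then have "(L - 1, h - 2) \<notin> R" using True by blast
    moreover have "(L - 1, h - 2) \<in> R" if "3 \<le> h" using down1[of h "h - 2"] mem1 sub that by auto
    ultimately have "h \<le> 2" by linarith
    then have "h = v0" using oddh hge v0pos by presburger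
    then show ?thesis unfolding h_def m_def .
  next
    case False
    then obtain \<eta>' where e': "\<eta>' \<in> T" "shift \<eta> \<subseteq> \<eta>'" using TDr_shift[OF T less.prems(2)] by blast
    obtain k0' v0' ws' where p': "odd (k0' + v0')" "dyck ws'" "ws' \<noteq> []" "\<eta>' = tt k0' v0' ws'"
      using TDr_params[OF T e'(1)] by blast
    have a1: "(L - 1, h - 2) \<in> \<eta>'" using mem1 e'(2) by (auto simp: mem_shift)
    have a2: "(L, h - 2) \<in> \<eta>'" using mem2 e'(2) by (auto simp: mem_shift)
    have a0: "(k0, v0 - 2) \<in> \<eta>'" using mem0 e'(2) by (auto simp: mem_shift)
    have k1: "k0' < L" using a1 unfolding p'(4) mem_tt by auto
    have k2: "L < k0' + int (length ws')" using a2 unfolding p'(4) mem_tt by auto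
    have "odd (L + (h - 2))" using oddh evenL by presburger
    then have hh: "h - 2 = vh v0' ws' (nat (L - k0'))" using a2 tt_NE[OF p'(1)] p'(4) by blast
    have "nat (vh v0' ws' (nat (L - k0'))) < n" using less.prems(1) hh v0pos hge unfolding h_def m_def by linarith
    from less.IH[OF this refl e'(1) p'(4) p'(1) p'(2) k1 k2] hh have "h - 2 = v0'" by simp
    moreover have "v0' \<le> v0 - 2" using tt_ge[OF p'(2)] a0 p'(4) by blast
    ultimately have "h = v0" using hge by linarith
    then show ?thesis unfolding h_def m_def .
  qed
qed

lemma cross:
  assumes "T \<in> TDr R" "\<eta> \<in> T" "\<eta> = tt k0 v0 ws" "odd (k0 + v0)" "dyck ws" "k0 < L" "L < k0 + int (length ws)"
  shows "vh v0 ws (nat (L - k0)) = v0"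
  using cross_aux[OF assms(1) refl assms(2-)] .

end

definition cL :: "int \<Rightarrow> (int \<times> int) set \<Rightarrow> (int \<times> int) set" where
  "cL L S = S \<inter> {p. fst p < L}"
definition cR :: "int \<Rightarrow> (int \<times> int) set \<Rightarrow> (int \<times> int) set" where
  "cR L S = S \<inter> {p. L \<le> fst p}"
definition mt :: "int \<Rightarrow> (int \<times> int) set \<Rightarrow> (int \<times> int) set \<Rightarrow> bool" where
  "mt L A B \<longleftrightarrow> (\<exists>v. odd (L + v) \<and> (L - 1, v) \<in> A \<and> (L, v) \<in> B)"

lemma mem_cL: "(k, v) \<in> cL L S \<longleftrightarrow> (k, v) \<in> S \<and> k < L" by (simp add: cL_def)
lemma mem_cR: "(k, v) \<in> cR L S \<longleftrightarrow> (k, v) \<in> S \<and> L \<le> k" by (simp add: cR_def)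
lemma cL_sub: "cL L S \<subseteq> S" by (auto simp: cL_def)
lemma cR_sub: "cR L S \<subseteq> S" by (auto simp: cR_def)
lemma cL_cR: "cL L S \<union> cR L S = S" by (auto simp: cL_def cR_def)
lemma cL_mono: "S \<subseteq> S' \<Longrightarrow> cL L S \<subseteq> cL L S'" by (auto simp: cL_def)
lemma cR_mono: "S \<subseteq> S' \<Longrightarrow> cR L S \<subseteq> cR L S'" by (auto simp: cR_def)
lemma shift_cL: "shift (cL L S) = cL L (shift S)"
  by (auto simp: cL_def shift_def)
lemma shift_cR: "shift (cR L S) = cR L (shift S)"
  by (auto simp: cR_def shift_def)
lemma cL_Un: "cL L (A \<union> B) = cL L A \<union> cL L B" by (auto simp: cL_def)
lemma cR_Un: "cR L (A \<union> B) = cR L A \<union> cR L B" by (auto simp: cR_def)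
lemma cL_cL: "cL L (cL L S) = cL L S" by (auto simp: cL_def)
lemma cR_cR: "cR L (cR L S) = cR L S" by (auto simp: cR_def)
lemma cL_cR0: "cL L (cR L S) = {}" by (auto simp: cL_def cR_def)
lemma cR_cL0: "cR L (cL L S) = {}" by (auto simp: cL_def cR_def)

lemma border_cL: "border (cL L S) u v \<Longrightarrow> (u < L \<and> border S u v) \<or> (u = L \<and> (L - 1, v) \<in> S \<and> odd (L + v))"
  unfolding border_def mem_cL by (cases "u < L"; cases "u = L") auto

lemma border_cR: "border (cR L S) u v \<Longrightarrow> (L < u \<and> border S u v) \<or> (u = L \<and> (L, v) \<in> S \<and> odd (L + v))"
  unfolding border_def mem_cR by (cases "L < u"; cases "u = L") auto

lemma border_split: "border S u v \<Longrightarrow> (u < L \<and> border (cL L S) u v) \<or> (L < u \<and> border (cR L S) u v)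
   \<or> (u = L \<and> odd (L + v) \<and> (((L - 1, v) \<in> S) \<noteq> ((L, v) \<in> S)))"
  unfolding border_def mem_cL mem_cR by (cases "u < L"; cases "u = L") auto

lemma border_nonempty: "border S u v \<Longrightarrow> S \<noteq> {}"
  unfolding border_def by auto

lemma tt_sub_lt: "k0 + int (length ws) \<le> L \<Longrightarrow> (k, v) \<in> tt k0 v0 ws \<Longrightarrow> k < L"
  unfolding mem_tt by auto
lemma tt_sub_ge: "L \<le> k0 \<Longrightarrow> (k, v) \<in> tt k0 v0 ws \<Longrightarrow> L \<le> k"
  unfolding mem_tt by auto

lemma cL_tt_left: "k0 + int (length ws) \<le> L \<Longrightarrow> cL L (tt k0 v0 ws) = tt k0 v0 ws"
  using tt_sub_lt unfolding cL_def by fastforce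
lemma cL_tt_right: "L \<le> k0 \<Longrightarrow> cL L (tt k0 v0 ws) = {}"
  using tt_sub_ge unfolding cL_def by fastforce
lemma cR_tt_left: "k0 + int (length ws) \<le> L \<Longrightarrow> cR L (tt k0 v0 ws) = {}"
  using tt_sub_lt unfolding cR_def by fastforce
lemma cR_tt_right: "L \<le> k0 \<Longrightarrow> cR L (tt k0 v0 ws) = tt k0 v0 ws"
  using tt_sub_ge unfolding cR_def by fastforce

lemma tt_split:
  assumes "k0 < L" "L < k0 + int (length ws)" "vh v0 ws (nat (L - k0)) = v0"
  shows "cL L (tt k0 v0 ws) = tt k0 v0 (take (nat (L - k0)) ws)"
    and "cR L (tt k0 v0 ws) = tt L v0 (drop (nat (L - k0)) ws)"
proof -
  define m where "m = nat (L - k0)"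
  have m: "L = k0 + int m" "m < length ws" using assms unfolding m_def by auto
  have lt: "length (take m ws) = m" using m by simp
  have e: "tt k0 v0 ws = tt k0 v0 (take m ws) \<union> tt L v0 (drop m ws)"
    using tt_append[of k0 v0 "take m ws" "drop m ws"] assms(3) m lt unfolding m_def[symmetric]
    by (simp add: vh_take)
  have l: "cL L (tt k0 v0 (take m ws)) = tt k0 v0 (take m ws)" by (rule cL_tt_left) (use m lt in simp)
  have r: "cR L (tt L v0 (drop m ws)) = tt L v0 (drop m ws)" by (rule cR_tt_right) simp
  show "cL L (tt k0 v0 ws) = tt k0 v0 (take (nat (L - k0)) ws)"
    unfolding m_def[symmetric] e cL_Un l cL_tt_right[of L L, OF order_refl] by simp
  show "cR L (tt k0 v0 ws) = tt L v0 (drop (nat (L - k0)) ws)"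
    unfolding m_def[symmetric] e cR_Un r using cR_tt_left[of k0 "take m ws" L v0] m lt by simp
qed

context cutR begin

lemma cut_tiles:
  assumes T: "T \<in> TDr R" and h: "\<eta> \<in> T"
  shows "cL L \<eta> \<noteq> {} \<Longrightarrow> is_trunc_tile (cL L \<eta>)"
    and "cR L \<eta> \<noteq> {} \<Longrightarrow> is_trunc_tile (cR L \<eta>)"
    and "cL L \<eta> \<noteq> {} \<Longrightarrow> cR L \<eta> \<noteq> {} \<Longrightarrow> mt L (cL L \<eta>) (cR L \<eta>)"
proof -
  obtain k0 v0 ws where p: "odd (k0 + v0)" "dyck ws" "ws \<noteq> []" "\<eta> = tt k0 v0 ws"
    using TDr_params[OF T h] by blast
  have tile: "is_trunc_tile \<eta>" using TDr_tile[OF T h] .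
  consider (left) "k0 + int (length ws) \<le> L" | (right) "L \<le> k0" | (mid) "k0 < L" "L < k0 + int (length ws)"
    by linarith
  then have "(cL L \<eta> \<noteq> {} \<longrightarrow> is_trunc_tile (cL L \<eta>)) \<and> (cR L \<eta> \<noteq> {} \<longrightarrow> is_trunc_tile (cR L \<eta>))
     \<and> (cL L \<eta> \<noteq> {} \<longrightarrow> cR L \<eta> \<noteq> {} \<longrightarrow> mt L (cL L \<eta>) (cR L \<eta>))"
  proof cases
    case left
    then show ?thesis using tile p(4) cL_tt_left[OF left] cR_tt_left[OF left] by simp
  next
    case right
    then show ?thesis using tile p(4) cL_tt_right[OF right] cR_tt_right[OF right] by simp
  next
    case mid
    define m where "m = nat (L - k0)"
    have m: "L = k0 + int m" "0 < m" "m < length ws" using mid unfolding m_def by auto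
    have c: "vh v0 ws m = v0" using cross[OF T h p(4) p(1) p(2) mid] unfolding m_def .
    have c0: "vh 0 ws m = 0" using c vh_base[of v0 ws m] by simp
    have par: "even (vh v0 ws m - v0 - int m)" by (rule vh_parity) (use m in simp)
    have oddL: "odd (L + v0)" using par c m(1) p(1) by presburger
    have sp: "cL L \<eta> = tt k0 v0 (take m ws)" "cR L \<eta> = tt L v0 (drop m ws)"
      using tt_split[OF mid c[unfolded m_def]] p(4) unfolding m_def by auto
    have t1: "is_trunc_tile (cL L \<eta>)" unfolding sp is_trunc_tile_tt
      using p(1) dyck_take[OF p(2) _ c0] m by (intro exI[of _ k0] exI[of _ v0] exI[of _ "take m ws"]) auto
    have t2: "is_trunc_tile (cR L \<eta>)" unfolding sp is_trunc_tile_tt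
      using oddL dyck_drop[OF p(2) _ c0] m by (intro exI[of _ L] exI[of _ v0] exI[of _ "drop m ws"]) auto
    have a1: "(L - 1, v0) \<in> \<eta>"
    proof -
      have "nat (L - 1 - k0) = m - 1" "Suc (m - 1) = m" using m by auto
      then show ?thesis unfolding p(4) mem_tt using m c by auto
    qed
    have a2: "(L, v0) \<in> \<eta>" unfolding p(4) mem_tt using m c m_def by auto
    have "mt L (cL L \<eta>) (cR L \<eta>)" unfolding mt_def using a1 a2 oddL by (auto simp: mem_cL mem_cR)
    then show ?thesis using t1 t2 by blast
  qed
  then show "cL L \<eta> \<noteq> {} \<Longrightarrow> is_trunc_tile (cL L \<eta>)"
    and "cR L \<eta> \<noteq> {} \<Longrightarrow> is_trunc_tile (cR L \<eta>)"
    and "cL L \<eta> \<noteq> {} \<Longrightarrow> cR L \<eta> \<noteq> {} \<Longrightarrow> mt L (cL L \<eta>) (cR L \<eta>)" by blast+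
qed

end

lemma shift_nonempty: "S \<noteq> {} \<Longrightarrow> shift S \<noteq> {}" by (simp add: shift_def)

context cutR begin

lemma phi1_valid:
  assumes T: "T \<in> TDr R"
  shows "cL L ` T - {{}} \<in> TDr (cL L R)"
proof (rule TDr_I)
  show "\<forall>\<eta>\<in>cL L ` T - {{}}. is_trunc_tile \<eta> \<and> \<eta> \<subseteq> cL L R"
    using cut_tiles(1)[OF T] TDr_sub[OF T] cL_mono by blast
  show "\<forall>\<eta>1\<in>cL L ` T - {{}}. \<forall>\<eta>2\<in>cL L ` T - {{}}. \<eta>1 \<noteq> \<eta>2 \<longrightarrow> \<eta>1 \<inter> \<eta>2 = {}"
  proof (intro ballI impI)
    fix a b assume a: "a \<in> cL L ` T - {{}}" and b: "b \<in> cL L ` T - {{}}" and ne: "a \<noteq> b"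
    obtain \<eta> \<eta>' where e: "\<eta> \<in> T" "a = cL L \<eta>" "\<eta>' \<in> T" "b = cL L \<eta>'" using a b by blast
    then have "\<eta> \<noteq> \<eta>'" using ne by blast
    then have "\<eta> \<inter> \<eta>' = {}" using TDr_disj[OF T e(1,3)] by blast
    then show "a \<inter> b = {}" using e cL_sub by blast
  qed
  show "\<forall>\<eta>\<in>cL L ` T - {{}}. shift \<eta> \<inter> cL L R \<noteq> {} \<longrightarrow> (\<exists>\<eta>'\<in>cL L ` T - {{}}. \<eta>' \<noteq> \<eta> \<and> shift \<eta> \<subseteq> \<eta>')"
  proof (intro ballI impI)
    fix a assume a: "a \<in> cL L ` T - {{}}" and s: "shift a \<inter> cL L R \<noteq> {}"
    obtain \<eta> where e: "\<eta> \<in> T" "a = cL L \<eta>" "a \<noteq> {}" using a by blast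
    have "shift \<eta> \<inter> R \<noteq> {}" using s e(2) shift_cL cL_sub by blast
    then obtain \<eta>' where e': "\<eta>' \<in> T" "\<eta>' \<noteq> \<eta>" "shift \<eta> \<subseteq> \<eta>'" using TDr_shift[OF T e(1)] by blast
    have sub: "shift a \<subseteq> cL L \<eta>'" using e(2) e'(3) shift_cL cL_mono by metis
    have ne: "cL L \<eta>' \<noteq> {}" using sub shift_nonempty[OF e(3)] by blast
    have d: "\<eta> \<inter> \<eta>' = {}" using TDr_disj[OF T e(1) e'(1)] e'(2) by blast
    have "cL L \<eta>' \<noteq> a" using d e(2,3) ne cL_sub by blast
    then show "\<exists>\<eta>'\<in>cL L ` T - {{}}. \<eta>' \<noteq> a \<and> shift a \<subseteq> \<eta>'" using e'(1) ne sub by blast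
  qed
  show "\<forall>\<eta>1\<in>cL L ` T - {{}}. \<forall>\<eta>2\<in>cL L ` T - {{}}. \<eta>1 \<noteq> \<eta>2 \<longrightarrow> \<not> (\<exists>u v. border \<eta>1 u v \<and> border \<eta>2 u v)"
  proof (intro ballI impI notI)
    fix a b assume a: "a \<in> cL L ` T - {{}}" and b: "b \<in> cL L ` T - {{}}" and ne: "a \<noteq> b"
      and "\<exists>u v. border a u v \<and> border b u v"
    then obtain u v where bd: "border a u v" "border b u v" by blast
    obtain \<eta> \<eta>' where e: "\<eta> \<in> T" "a = cL L \<eta>" "\<eta>' \<in> T" "b = cL L \<eta>'" using a b by blast
    then have ne': "\<eta> \<noteq> \<eta>'" using ne by blast
    have d: "\<eta> \<inter> \<eta>' = {}" using TDr_disj[OF T e(1,3) ne'] .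
    from border_cL[OF bd(1)[unfolded e(2)]] border_cL[OF bd(2)[unfolded e(4)]]
    show False
      using TDr_border[OF T e(1,3)] ne' d by auto
  qed
qed

lemma phi2_valid:
  assumes T: "T \<in> TDr R"
  shows "cR L ` T - {{}} \<in> TDr (cR L R)"
proof (rule TDr_I)
  show "\<forall>\<eta>\<in>cR L ` T - {{}}. is_trunc_tile \<eta> \<and> \<eta> \<subseteq> cR L R"
    using cut_tiles(2)[OF T] TDr_sub[OF T] cR_mono by blast
  show "\<forall>\<eta>1\<in>cR L ` T - {{}}. \<forall>\<eta>2\<in>cR L ` T - {{}}. \<eta>1 \<noteq> \<eta>2 \<longrightarrow> \<eta>1 \<inter> \<eta>2 = {}"
  proof (intro ballI impI)
    fix a b assume a: "a \<in> cR L ` T - {{}}" and b: "b \<in> cR L ` T - {{}}" and ne: "a \<noteq> b"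
    obtain \<eta> \<eta>' where e: "\<eta> \<in> T" "a = cR L \<eta>" "\<eta>' \<in> T" "b = cR L \<eta>'" using a b by blast
    then have "\<eta> \<noteq> \<eta>'" using ne by blast
    then have "\<eta> \<inter> \<eta>' = {}" using TDr_disj[OF T e(1,3)] by blast
    then show "a \<inter> b = {}" using e cR_sub by blast
  qed
  show "\<forall>\<eta>\<in>cR L ` T - {{}}. shift \<eta> \<inter> cR L R \<noteq> {} \<longrightarrow> (\<exists>\<eta>'\<in>cR L ` T - {{}}. \<eta>' \<noteq> \<eta> \<and> shift \<eta> \<subseteq> \<eta>')"
  proof (intro ballI impI)
    fix a assume a: "a \<in> cR L ` T - {{}}" and s: "shift a \<inter> cR L R \<noteq> {}"
    obtain \<eta> where e: "\<eta> \<in> T" "a = cR L \<eta>" "a \<noteq> {}" using a by blast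
    have "shift \<eta> \<inter> R \<noteq> {}" using s e(2) shift_cR cR_sub by blast
    then obtain \<eta>' where e': "\<eta>' \<in> T" "\<eta>' \<noteq> \<eta>" "shift \<eta> \<subseteq> \<eta>'" using TDr_shift[OF T e(1)] by blast
    have sub: "shift a \<subseteq> cR L \<eta>'" using e(2) e'(3) shift_cR cR_mono by metis
    have ne: "cR L \<eta>' \<noteq> {}" using sub shift_nonempty[OF e(3)] by blast
    have d: "\<eta> \<inter> \<eta>' = {}" using TDr_disj[OF T e(1) e'(1)] e'(2) by blast
    have "cR L \<eta>' \<noteq> a" using d e(2,3) ne cR_sub by blast
    then show "\<exists>\<eta>'\<in>cR L ` T - {{}}. \<eta>' \<noteq> a \<and> shift a \<subseteq> \<eta>'" using e'(1) ne sub by blast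
  qed
  show "\<forall>\<eta>1\<in>cR L ` T - {{}}. \<forall>\<eta>2\<in>cR L ` T - {{}}. \<eta>1 \<noteq> \<eta>2 \<longrightarrow> \<not> (\<exists>u v. border \<eta>1 u v \<and> border \<eta>2 u v)"
  proof (intro ballI impI notI)
    fix a b assume a: "a \<in> cR L ` T - {{}}" and b: "b \<in> cR L ` T - {{}}" and ne: "a \<noteq> b"
      and "\<exists>u v. border a u v \<and> border b u v"
    then obtain u v where bd: "border a u v" "border b u v" by blast
    obtain \<eta> \<eta>' where e: "\<eta> \<in> T" "a = cR L \<eta>" "\<eta>' \<in> T" "b = cR L \<eta>'" using a b by blast
    then have ne': "\<eta> \<noteq> \<eta>'" using ne by blast
    have d: "\<eta> \<inter> \<eta>' = {}" using TDr_disj[OF T e(1,3) ne'] .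
    from border_cR[OF bd(1)[unfolded e(2)]] border_cR[OF bd(2)[unfolded e(4)]]
    show False
      using TDr_border[OF T e(1,3)] ne' d by auto
  qed
qed

end

definition Psi :: "int \<Rightarrow> (int \<times> int) set set \<Rightarrow> (int \<times> int) set set \<Rightarrow> (int \<times> int) set set" where
  "Psi L T1 T2 = {S. S \<noteq> {} \<and> (cL L S = {} \<or> cL L S \<in> T1) \<and> (cR L S = {} \<or> cR L S \<in> T2)
     \<and> (cL L S \<noteq> {} \<longrightarrow> cR L S \<noteq> {} \<longrightarrow> mt L (cL L S) (cR L S))
     \<and> (cL L S \<noteq> {} \<longrightarrow> cR L S = {} \<longrightarrow> (\<forall>B\<in>T2. \<not> mt L (cL L S) B))
     \<and> (cL L S = {} \<longrightarrow> cR L S \<noteq> {} \<longrightarrow> (\<forall>A\<in>T1. \<not> mt L A (cR L S)))}"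

context cutR begin

lemma T1_props:
  assumes T1: "T1 \<in> TDr (cL L R)" and A: "A \<in> T1"
  shows "cL L A = A" "cR L A = {}" "A \<noteq> {}" "A \<subseteq> R"
proof -
  have s: "A \<subseteq> cL L R" using TDr_sub[OF T1 A] .
  then show "cL L A = A" "cR L A = {}" by (auto simp: cL_def cR_def)
  show "A \<noteq> {}" using tile_nonempty TDr_tile[OF T1 A] by blast
  show "A \<subseteq> R" using s cL_sub by blast
qed

lemma T2_props:
  assumes T2: "T2 \<in> TDr (cR L R)" and B: "B \<in> T2"
  shows "cR L B = B" "cL L B = {}" "B \<noteq> {}" "B \<subseteq> R"
proof -
  have s: "B \<subseteq> cR L R" using TDr_sub[OF T2 B] .
  then show "cR L B = B" "cL L B = {}" by (auto simp: cL_def cR_def)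
  show "B \<noteq> {}" using tile_nonempty TDr_tile[OF T2 B] by blast
  show "B \<subseteq> R" using s cR_sub by blast
qed

lemma sw_unique: "is_trunc_tile A \<Longrightarrow> (k, v) \<in> A \<Longrightarrow> (k, v') \<in> A \<Longrightarrow> even (k + v) \<Longrightarrow> even (k + v') \<Longrightarrow> v = v'"
proof -
  assume h: "is_trunc_tile A" "(k, v) \<in> A" "(k, v') \<in> A" "even (k + v)" "even (k + v')"
  obtain k0 v0 ws where p: "odd (k0 + v0)" "A = tt k0 v0 ws" using h(1) unfolding is_trunc_tile_tt by blast
  have "v = vh v0 ws (Suc (nat (k - k0)))" using h(2) tt_SW[OF p(1) h(4)] p(2) by simp
  moreover have "v' = vh v0 ws (Suc (nat (k - k0)))" using h(3) tt_SW[OF p(1) h(5)] p(2) by simp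
  ultimately show ?thesis by simp
qed

lemma ne_unique: "is_trunc_tile A \<Longrightarrow> (k, v) \<in> A \<Longrightarrow> (k, v') \<in> A \<Longrightarrow> odd (k + v) \<Longrightarrow> odd (k + v') \<Longrightarrow> v = v'"
proof -
  assume h: "is_trunc_tile A" "(k, v) \<in> A" "(k, v') \<in> A" "odd (k + v)" "odd (k + v')"
  obtain k0 v0 ws where p: "odd (k0 + v0)" "A = tt k0 v0 ws" using h(1) unfolding is_trunc_tile_tt by blast
  have "v = vh v0 ws (nat (k - k0))" using h(2) tt_NE[OF p(1) h(4)] p(2) by simp
  moreover have "v' = vh v0 ws (nat (k - k0))" using h(3) tt_NE[OF p(1) h(5)] p(2) by simp
  ultimately show ?thesis by simp
qed

context
  fixes T1 T2
  assumes T1: "T1 \<in> TDr (cL L R)" and T2: "T2 \<in> TDr (cR L R)"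
begin

lemma P1: "A \<in> T1 \<Longrightarrow> B \<in> T2 \<Longrightarrow> B' \<in> T2 \<Longrightarrow> mt L A B \<Longrightarrow> mt L A B' \<Longrightarrow> B = B'"
proof -
  assume h: "A \<in> T1" "B \<in> T2" "B' \<in> T2" "mt L A B" "mt L A B'"
  then obtain v v' where v: "odd (L + v)" "(L - 1, v) \<in> A" "(L, v) \<in> B" "odd (L + v')" "(L - 1, v') \<in> A" "(L, v') \<in> B'"
    unfolding mt_def by blast
  have "v = v'" by (rule sw_unique[OF TDr_tile[OF T1 h(1)] v(2) v(5)]) (use v in presburger)+
  then have "B \<inter> B' \<noteq> {}" using v by blast
  then show "B = B'" using TDr_disj[OF T2 h(2,3)] by blast
qed

lemma P2: "A \<in> T1 \<Longrightarrow> A' \<in> T1 \<Longrightarrow> B \<in> T2 \<Longrightarrow> mt L A B \<Longrightarrow> mt L A' B \<Longrightarrow> A = A'"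
proof -
  assume h: "A \<in> T1" "A' \<in> T1" "B \<in> T2" "mt L A B" "mt L A' B"
  then obtain v v' where v: "odd (L + v)" "(L - 1, v) \<in> A" "(L, v) \<in> B" "odd (L + v')" "(L - 1, v') \<in> A'" "(L, v') \<in> B"
    unfolding mt_def by blast
  have "v = v'" by (rule ne_unique[OF TDr_tile[OF T2 h(3)] v(3) v(6)]) (use v in presburger)+
  then have "A \<inter> A' \<noteq> {}" using v by blast
  then show "A = A'" using TDr_disj[OF T1 h(1,2)] by blast
qed

lemma P3:
  assumes A: "A \<in> T1" and B: "B \<in> T2" and m: "mt L A B"
  shows "is_trunc_tile (A \<union> B)"
proof -
  obtain v where v: "odd (L + v)" "(L - 1, v) \<in> A" "(L, v) \<in> B" using m unfolding mt_def by blast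
  obtain k0 v0 w1 where p1: "odd (k0 + v0)" "dyck w1" "w1 \<noteq> []" "A = tt k0 v0 w1" using TDr_params[OF T1 A] by blast
  obtain k0' v0' w2 where p2: "odd (k0' + v0')" "dyck w2" "w2 \<noteq> []" "B = tt k0' v0' w2" using TDr_params[OF T2 B] by blast
  have Asub: "k < L" if "(k, v) \<in> A" for k v using that T1_props(1)[OF T1 A] mem_cL[of k v L A] by simp
  have Bsub: "L \<le> k" if "(k, v) \<in> B" for k v using that T2_props(1)[OF T2 B] mem_cR[of k v L B] by simp
  have "(k0 + int (length w1) - 1, vh v0 w1 (length w1)) \<in> A"
  proof -
    have "nat (k0 + int (length w1) - 1 - k0) = length w1 - 1" "Suc (length w1 - 1) = length w1" using p1(3) by auto
    then show ?thesis unfolding p1(4) mem_tt using p1(3) by auto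
  qed
  then have e1: "k0 + int (length w1) \<le> L" using Asub by fastforce
  have sw: "even ((L - 1) + v)" using v(1) by presburger
  from v(2)[unfolded p1(4)] tt_SW[OF p1(1) sw] have a1: "L - 1 < k0 + int (length w1)" "v = vh v0 w1 (Suc (nat (L - 1 - k0)))" "k0 \<le> L - 1"
    by auto
  have le: "k0 + int (length w1) = L" using e1 a1 by linarith
  have "Suc (nat (L - 1 - k0)) = length w1" using le a1 by linarith
  then have vv0: "v = v0" using a1(2) dyck_end[OF p1(2)] vh_base[of v0 w1 "length w1"] by simp
  have "(k0', v0') \<in> B" unfolding p2(4) mem_tt using p2(3) by auto
  then have k0ge: "L \<le> k0'" using Bsub by blast
  from v(3)[unfolded p2(4)] tt_NE[OF p2(1) v(1)] have b1: "k0' \<le> L" "v = vh v0' w2 (nat (L - k0'))" by auto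
  have k0': "k0' = L" using k0ge b1 by linarith
  then have vv0': "v = v0'" using b1 by simp
  have "A \<union> B = tt k0 v0 (w1 @ w2)"
    unfolding tt_append p1(4) p2(4) using le k0' vv0 vv0' dyck_end[OF p1(2)] vh_base[of v0 w1 "length w1"] by simp
  then show ?thesis unfolding is_trunc_tile_tt using p1 p2 dyck_append[OF p1(2) p2(2)]
    by (intro exI[of _ k0] exI[of _ v0] exI[of _ "w1 @ w2"]) auto
qed

lemma P5: "A \<in> T1 \<Longrightarrow> \<exists>S\<in>Psi L T1 T2. cL L S = A"
proof -
  assume A: "A \<in> T1"
  note pa = T1_props[OF T1 A]
  show ?thesis
  proof (cases "\<exists>B\<in>T2. mt L A B")
    case True
    then obtain B where B: "B \<in> T2" "mt L A B" by blast
    note pb = T2_props[OF T2 B(1)]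
    have c: "cL L (A \<union> B) = A" "cR L (A \<union> B) = B" using pa pb by (simp_all add: cL_Un cR_Un)
    have "A \<union> B \<in> Psi L T1 T2" unfolding Psi_def using c A B pa pb by auto
    then show ?thesis using c by blast
  next
    case False
    have "A \<in> Psi L T1 T2" unfolding Psi_def using False A pa by auto
    then show ?thesis using pa by blast
  qed
qed

lemma P5': "B \<in> T2 \<Longrightarrow> \<exists>S\<in>Psi L T1 T2. cR L S = B"
proof -
  assume B: "B \<in> T2"
  note pb = T2_props[OF T2 B]
  show ?thesis
  proof (cases "\<exists>A\<in>T1. mt L A B")
    case True
    then obtain A where A: "A \<in> T1" "mt L A B" by blast
    note pa = T1_props[OF T1 A(1)]
    have c: "cL L (A \<union> B) = A" "cR L (A \<union> B) = B" using pa pb by (simp_all add: cL_Un cR_Un)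
    have "A \<union> B \<in> Psi L T1 T2" unfolding Psi_def using c A B pa pb by auto
    then show ?thesis using c by blast
  next
    case False
    have "B \<in> Psi L T1 T2" unfolding Psi_def using False B pb by auto
    then show ?thesis using pb by blast
  qed
qed

lemma P6: "A \<in> T1 \<Longrightarrow> B \<in> T2 \<Longrightarrow> mt L A B \<Longrightarrow> A \<union> B \<in> Psi L T1 T2"
proof -
  assume A: "A \<in> T1" and B: "B \<in> T2" and m: "mt L A B"
  note pa = T1_props[OF T1 A] note pb = T2_props[OF T2 B]
  have c: "cL L (A \<union> B) = A" "cR L (A \<union> B) = B" using pa pb by (simp_all add: cL_Un cR_Un)
  show "A \<union> B \<in> Psi L T1 T2" unfolding Psi_def using c A B pa pb m by auto
qed

lemma PsiD: "S \<in> Psi L T1 T2 \<Longrightarrow> S \<noteq> {} \<and> (cL L S = {} \<or> cL L S \<in> T1) \<and> (cR L S = {} \<or> cR L S \<in> T2)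
     \<and> (cL L S \<noteq> {} \<longrightarrow> cR L S \<noteq> {} \<longrightarrow> mt L (cL L S) (cR L S))
     \<and> (cL L S \<noteq> {} \<longrightarrow> cR L S = {} \<longrightarrow> (\<forall>B\<in>T2. \<not> mt L (cL L S) B))
     \<and> (cL L S = {} \<longrightarrow> cR L S \<noteq> {} \<longrightarrow> (\<forall>A\<in>T1. \<not> mt L A (cR L S)))"
  unfolding Psi_def by (rule CollectD)

lemma P4: "S \<in> Psi L T1 T2 \<Longrightarrow> S' \<in> Psi L T1 T2 \<Longrightarrow> cL L S = cL L S' \<Longrightarrow> cL L S \<noteq> {} \<Longrightarrow> S = S'"
proof -
  assume S: "S \<in> Psi L T1 T2" and S': "S' \<in> Psi L T1 T2" and e: "cL L S = cL L S'" and ne: "cL L S \<noteq> {}"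
  note d = PsiD[OF S] note d' = PsiD[OF S']
  have A: "cL L S \<in> T1" using d ne by blast
  have "cR L S = cR L S'"
  proof (cases "cR L S = {}"; cases "cR L S' = {}")
    assume "cR L S = {}" "cR L S' = {}" then show ?thesis by simp
  next
    assume a: "cR L S = {}" "cR L S' \<noteq> {}"
    then have "mt L (cL L S) (cR L S')" "cR L S' \<in> T2" using d' e ne by auto
    then show ?thesis using d a ne by blast
  next
    assume a: "cR L S \<noteq> {}" "cR L S' = {}"
    then have "mt L (cL L S) (cR L S)" "cR L S \<in> T2" using d e ne by auto
    then show ?thesis using d' a ne e by metis
  next
    assume a: "cR L S \<noteq> {}" "cR L S' \<noteq> {}"
    then have "mt L (cL L S) (cR L S)" "cR L S \<in> T2" "mt L (cL L S) (cR L S')" "cR L S' \<in> T2" using d d' e ne by auto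
    then show ?thesis using P1[OF A] by blast
  qed
  then show "S = S'" using e cL_cR by metis
qed

lemma P4': "S \<in> Psi L T1 T2 \<Longrightarrow> S' \<in> Psi L T1 T2 \<Longrightarrow> cR L S = cR L S' \<Longrightarrow> cR L S \<noteq> {} \<Longrightarrow> S = S'"
proof -
  assume S: "S \<in> Psi L T1 T2" and S': "S' \<in> Psi L T1 T2" and e: "cR L S = cR L S'" and ne: "cR L S \<noteq> {}"
  note d = PsiD[OF S] note d' = PsiD[OF S']
  have B: "cR L S \<in> T2" using d ne by blast
  have "cL L S = cL L S'"
  proof (cases "cL L S = {}"; cases "cL L S' = {}")
    assume "cL L S = {}" "cL L S' = {}" then show ?thesis by simp
  next
    assume a: "cL L S = {}" "cL L S' \<noteq> {}"
    then have "mt L (cL L S') (cR L S)" "cL L S' \<in> T1" using d' e ne by auto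
    then show ?thesis using d a ne by blast
  next
    assume a: "cL L S \<noteq> {}" "cL L S' = {}"
    then have "mt L (cL L S) (cR L S)" "cL L S \<in> T1" using d e ne by auto
    then show ?thesis using d' a ne e by metis
  next
    assume a: "cL L S \<noteq> {}" "cL L S' \<noteq> {}"
    then have "mt L (cL L S) (cR L S)" "cL L S \<in> T1" "mt L (cL L S') (cR L S)" "cL L S' \<in> T1" using d d' e ne by auto
    then show ?thesis using P2[OF _ _ B] by blast
  qed
  then show "S = S'" using e cL_cR by metis
qed

lemma Psi_disj: "S \<in> Psi L T1 T2 \<Longrightarrow> S' \<in> Psi L T1 T2 \<Longrightarrow> S \<noteq> S' \<Longrightarrow> S \<inter> S' = {}"
proof -
  assume S: "S \<in> Psi L T1 T2" and S': "S' \<in> Psi L T1 T2" and ne: "S \<noteq> S'"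
  note d = PsiD[OF S] note d' = PsiD[OF S']
  have l: "cL L S \<inter> cL L S' = {}"
  proof (cases "cL L S = {} \<or> cL L S' = {}")
    case True then show ?thesis by auto
  next
    case False
    then have "cL L S \<noteq> cL L S'" using P4[OF S S'] ne by blast
    moreover have "cL L S \<in> T1" "cL L S' \<in> T1" using d d' False by auto
    ultimately show ?thesis using TDr_disj[OF T1] by blast
  qed
  have r: "cR L S \<inter> cR L S' = {}"
  proof (cases "cR L S = {} \<or> cR L S' = {}")
    case True then show ?thesis by auto
  next
    case False
    then have "cR L S \<noteq> cR L S'" using P4'[OF S S'] ne by blast
    moreover have "cR L S \<in> T2" "cR L S' \<in> T2" using d d' False by auto
    ultimately show ?thesis using TDr_disj[OF T2] by blast
  qed
  show "S \<inter> S' = {}"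
  proof (rule ccontr)
    assume "S \<inter> S' \<noteq> {}"
    then obtain k v where kv: "(k, v) \<in> S" "(k, v) \<in> S'" by auto
    show False
    proof (cases "k < L")
      case True then show False using l kv by (auto simp: cL_def)
    next
      case False then show False using r kv by (auto simp: cR_def)
    qed
  qed
qed


lemma PsiL: "S \<in> Psi L T1 T2 \<Longrightarrow> cL L S \<noteq> {} \<Longrightarrow> cL L S \<in> T1"
  using PsiD by blast
lemma PsiR: "S \<in> Psi L T1 T2 \<Longrightarrow> cR L S \<noteq> {} \<Longrightarrow> cR L S \<in> T2"
  using PsiD by blast

lemma Psi_split: "S \<in> Psi L T1 T2 \<Longrightarrow> S = cL L S \<union> cR L S" using cL_cR by metis

lemma Psi_tile: "S \<in> Psi L T1 T2 \<Longrightarrow> is_trunc_tile S \<and> S \<subseteq> R"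
proof -
  assume S: "S \<in> Psi L T1 T2"
  note d = PsiD[OF S]
  have e: "S = cL L S \<union> cR L S" using Psi_split[OF S] .
  have sub: "S \<subseteq> R"
  proof -
    have "cL L S \<subseteq> R"
    proof (cases "cL L S = {}")
      case False then have "cL L S \<in> T1" using d by blast
      then show ?thesis using T1_props(4)[OF T1] by blast
    qed simp
    moreover have "cR L S \<subseteq> R"
    proof (cases "cR L S = {}")
      case False then have "cR L S \<in> T2" using d by blast
      then show ?thesis using T2_props(4)[OF T2] by blast
    qed simp
    ultimately show ?thesis using e by blast
  qed
  have "is_trunc_tile S"
  proof (cases "cL L S = {}"; cases "cR L S = {}")
    assume "cL L S = {}" "cR L S = {}" then show ?thesis using e d by simp
  next
    assume a: "cL L S = {}" "cR L S \<noteq> {}"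
    then have "cR L S \<in> T2" using d by blast
    then show ?thesis using TDr_tile[OF T2] e a by simp
  next
    assume a: "cL L S \<noteq> {}" "cR L S = {}"
    then have "cL L S \<in> T1" using d by blast
    then show ?thesis using TDr_tile[OF T1] e a by simp
  next
    assume a: "cL L S \<noteq> {}" "cR L S \<noteq> {}"
    then have "cL L S \<in> T1" "cR L S \<in> T2" "mt L (cL L S) (cR L S)" using d by blast+
    then show ?thesis using P3 e by metis
  qed
  then show ?thesis using sub by blast
qed

lemma Psi_half:
  assumes S: "S \<in> Psi L T1 T2" and S': "S' \<in> Psi L T1 T2" and v: "odd (L + v)"
    and a: "(L - 1, v) \<in> S" "(L, v) \<notin> S" "(L, v) \<in> S'"
  shows False
proof -
  note d = PsiD[OF S] note d' = PsiD[OF S']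
  have A: "(L - 1, v) \<in> cL L S" using a by (simp add: mem_cL)
  have B: "(L, v) \<in> cR L S'" using a by (simp add: mem_cR)
  have AT: "cL L S \<in> T1" using d A by blast
  have BT: "cR L S' \<in> T2" using d' B by blast
  have m: "mt L (cL L S) (cR L S')" unfolding mt_def using A B v by blast
  show False
  proof (cases "cR L S = {}")
    case True
    then have "\<forall>B\<in>T2. \<not> mt L (cL L S) B" using d A by blast
    then show False using m BT by blast
  next
    case False
    then have "mt L (cL L S) (cR L S)" "cR L S \<in> T2" using d A by blast+
    then have "cR L S = cR L S'" using P1[OF AT _ BT _ m] by blast
    then show False using B a(2) cR_sub by blast
  qed
qed

lemma Psi_valid: "Psi L T1 T2 \<in> TDr R"
proof (rule TDr_I)
  show "\<forall>\<eta>\<in>Psi L T1 T2. is_trunc_tile \<eta> \<and> \<eta> \<subseteq> R" using Psi_tile by blast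
  show "\<forall>\<eta>1\<in>Psi L T1 T2. \<forall>\<eta>2\<in>Psi L T1 T2. \<eta>1 \<noteq> \<eta>2 \<longrightarrow> \<eta>1 \<inter> \<eta>2 = {}" using Psi_disj by blast
  show "\<forall>\<eta>\<in>Psi L T1 T2. shift \<eta> \<inter> R \<noteq> {} \<longrightarrow> (\<exists>\<eta>'\<in>Psi L T1 T2. \<eta>' \<noteq> \<eta> \<and> shift \<eta> \<subseteq> \<eta>')"
  proof (intro ballI impI)
    fix S assume S: "S \<in> Psi L T1 T2" and sh: "shift S \<inter> R \<noteq> {}"
    note d = PsiD[OF S]
    have e: "S = cL L S \<union> cR L S" using Psi_split[OF S] .
    have shl: "shift (cL L S) \<inter> R = shift (cL L S) \<inter> cL L R"
      unfolding shift_cL by (auto simp: cL_def)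
    have shr: "shift (cR L S) \<inter> R = shift (cR L S) \<inter> cR L R"
      unfolding shift_cR by (auto simp: cR_def)
    have sh2: "shift S = shift (cL L S) \<union> shift (cR L S)" using e by (metis image_Un shift_def)
    have "S \<noteq> {}" using d by blast
    then consider (l) "cL L S \<noteq> {}" "cR L S = {}" | (r) "cL L S = {}" "cR L S \<noteq> {}" | (b) "cL L S \<noteq> {}" "cR L S \<noteq> {}"
      using e by blast
    then show "\<exists>\<eta>'\<in>Psi L T1 T2. \<eta>' \<noteq> S \<and> shift S \<subseteq> \<eta>'"
    proof cases
      case l
      then have A: "cL L S \<in> T1" using d by blast
      have "shift (cL L S) \<inter> cL L R \<noteq> {}" using sh sh2 shl l by (simp add: shift_def)
      then obtain A' where A': "A' \<in> T1" "A' \<noteq> cL L S" "shift (cL L S) \<subseteq> A'" using TDr_shift[OF T1 A] by blast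
      obtain S' where S': "S' \<in> Psi L T1 T2" "cL L S' = A'" using P5[OF A'(1)] by blast
      have "shift (cR L S) = {}" using l by (simp add: shift_def)
      then have "shift S \<subseteq> A'" using sh2 A'(3) by blast
      then have "shift S \<subseteq> S'" using S'(2) cL_sub[of L S'] by blast
      moreover have "S' \<noteq> S" using S'(2) A'(2) by blast
      ultimately show ?thesis using S'(1) by blast
    next
      case r
      then have B: "cR L S \<in> T2" using d by blast
      have "shift (cR L S) \<inter> cR L R \<noteq> {}" using sh sh2 shr r by (simp add: shift_def)
      then obtain B' where B': "B' \<in> T2" "B' \<noteq> cR L S" "shift (cR L S) \<subseteq> B'" using TDr_shift[OF T2 B] by blast
      obtain S' where S': "S' \<in> Psi L T1 T2" "cR L S' = B'" using P5'[OF B'(1)] by blast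
      have "shift (cL L S) = {}" using r by (simp add: shift_def)
      then have "shift S \<subseteq> B'" using sh2 B'(3) by blast
      then have "shift S \<subseteq> S'" using S'(2) cR_sub[of L S'] by blast
      moreover have "S' \<noteq> S" using S'(2) B'(2) by blast
      ultimately show ?thesis using S'(1) by blast
    next
      case b
      then have A: "cL L S \<in> T1" and B: "cR L S \<in> T2" and m: "mt L (cL L S) (cR L S)" using d by blast+
      obtain v where v: "odd (L + v)" "(L - 1, v) \<in> cL L S" "(L, v) \<in> cR L S" using m unfolding mt_def by blast
      have vA: "(L - 1, v) \<in> R" using v(2) T1_props(4)[OF T1 A] by blast
      have vB: "(L, v) \<in> R" using v(3) T2_props(4)[OF T2 B] by blast
      have sA: "(L - 1, v - 2) \<in> shift (cL L S)" using v(2) by (simp add: mem_shift)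
      have sB: "(L, v - 2) \<in> shift (cR L S)" using v(3) by (simp add: mem_shift)
      have both: "shift (cL L S) \<inter> cL L R \<noteq> {} \<and> shift (cR L S) \<inter> cR L R \<noteq> {}"
      proof -
        have "shift (cL L S) \<inter> R \<noteq> {} \<or> shift (cR L S) \<inter> R \<noteq> {}" using sh sh2 by blast
        then have "1 \<le> v - 2"
        proof
          assume "shift (cL L S) \<inter> R \<noteq> {}"
          then have "shift (cL L S) \<inter> cL L R \<noteq> {}" using shl by simp
          then obtain A' where A': "A' \<in> T1" "shift (cL L S) \<subseteq> A'" using TDr_shift[OF T1 A] by blast
          then have "(L - 1, v - 2) \<in> R" using sA T1_props(4)[OF T1 A'(1)] by blast
          then show ?thesis using pos by blast
        next
          assume "shift (cR L S) \<inter> R \<noteq> {}"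
          then have "shift (cR L S) \<inter> cR L R \<noteq> {}" using shr by simp
          then obtain B' where B': "B' \<in> T2" "shift (cR L S) \<subseteq> B'" using TDr_shift[OF T2 B] by blast
          then have "(L, v - 2) \<in> R" using sB T2_props(4)[OF T2 B'(1)] by blast
          then show ?thesis using pos by blast
        qed
        then have "(L - 1, v - 2) \<in> R" "(L, v - 2) \<in> R" using down1[OF vA] down2[OF vB] by auto
        then have "(L - 1, v - 2) \<in> cL L R" "(L, v - 2) \<in> cR L R" by (auto simp: mem_cL mem_cR)
        then show ?thesis using sA sB by blast
      qed
      obtain A' where A': "A' \<in> T1" "A' \<noteq> cL L S" "shift (cL L S) \<subseteq> A'" using TDr_shift[OF T1 A] both by blast
      obtain B' where B': "B' \<in> T2" "shift (cR L S) \<subseteq> B'" using TDr_shift[OF T2 B] both by blast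
      have o2: "odd (L + (v - 2))" using v(1) by presburger
      have m': "mt L A' B'" unfolding mt_def using sA sB A'(3) B'(2) o2 by blast
      have S': "A' \<union> B' \<in> Psi L T1 T2" using P6[OF A'(1) B'(1) m'] .
      have "shift S \<subseteq> A' \<union> B'" using sh2 A'(3) B'(2) by blast
      moreover have "A' \<union> B' \<noteq> S"
      proof
        assume "A' \<union> B' = S"
        then have "cL L (A' \<union> B') = cL L S" by (rule arg_cong)
        moreover have "cL L (A' \<union> B') = A'" using T1_props(1,2)[OF T1 A'(1)] T2_props(1,2)[OF T2 B'(1)] by (simp add: cL_Un)
        ultimately show False using A'(2) by simp
      qed
      ultimately show ?thesis using S' by (intro bexI[of _ "A' \<union> B'"] conjI)
    qed
  qed
  show "\<forall>\<eta>1\<in>Psi L T1 T2. \<forall>\<eta>2\<in>Psi L T1 T2. \<eta>1 \<noteq> \<eta>2 \<longrightarrow> \<not> (\<exists>u v. border \<eta>1 u v \<and> border \<eta>2 u v)"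
  proof (intro ballI impI notI)
    fix S S' assume S: "S \<in> Psi L T1 T2" and S': "S' \<in> Psi L T1 T2" and ne: "S \<noteq> S'"
      and "\<exists>u v. border S u v \<and> border S' u v"
    then obtain u v where bd: "border S u v" "border S' u v" by blast
    note d = PsiD[OF S] note d' = PsiD[OF S']
    have dj: "S \<inter> S' = {}" using Psi_disj[OF S S' ne] .
    consider (lt) "u < L" | (gt) "L < u" | (eq) "u = L" by linarith
    then show False
    proof cases
      case lt
      have b1: "border (cL L S) u v" "border (cL L S') u v" using border_split[OF bd(1), of L] border_split[OF bd(2), of L] lt by auto
      then have n: "cL L S \<noteq> {}" "cL L S' \<noteq> {}" using border_nonempty by blast+
      then have "cL L S \<in> T1" "cL L S' \<in> T1" using PsiL[OF S] PsiL[OF S'] by blast+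
      then have "cL L S = cL L S'" using TDr_border[OF T1 _ _ b1] by blast
      then show False using P4[OF S S'] n ne by blast
    next
      case gt
      have b1: "border (cR L S) u v" "border (cR L S') u v" using border_split[OF bd(1), of L] border_split[OF bd(2), of L] gt by auto
      then have n: "cR L S \<noteq> {}" "cR L S' \<noteq> {}" using border_nonempty by blast+
      then have "cR L S \<in> T2" "cR L S' \<in> T2" using PsiR[OF S] PsiR[OF S'] by blast+
      then have "cR L S = cR L S'" using TDr_border[OF T2 _ _ b1] by blast
      then show False using P4'[OF S S'] n ne by blast
    next
      case eq
      then have o: "odd (L + v)" and x1: "((L - 1, v) \<in> S) \<noteq> ((L, v) \<in> S)" and x2: "((L - 1, v) \<in> S') \<noteq> ((L, v) \<in> S')"
        using bd unfolding border_def by auto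
      show False
      proof (cases "(L - 1, v) \<in> S")
        case True
        then have "(L - 1, v) \<notin> S'" using dj by blast
        then show False using Psi_half[OF S S' o True] x1 x2 True by blast
      next
        case False
        then have "(L, v) \<in> S" using x1 by blast
        then have "(L, v) \<notin> S'" using dj by blast
        then show False using Psi_half[OF S' S o] x1 x2 False by blast
      qed
    qed
  qed
qed

lemma Phi_Psi1: "cL L ` Psi L T1 T2 - {{}} = T1"
proof
  show "cL L ` Psi L T1 T2 - {{}} \<subseteq> T1" using PsiD by blast
  show "T1 \<subseteq> cL L ` Psi L T1 T2 - {{}}"
  proof
    fix A assume A: "A \<in> T1"
    then obtain S where "S \<in> Psi L T1 T2" "cL L S = A" using P5 by blast
    then show "A \<in> cL L ` Psi L T1 T2 - {{}}" using T1_props(3)[OF T1 A] by blast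
  qed
qed

lemma Phi_Psi2: "cR L ` Psi L T1 T2 - {{}} = T2"
proof
  show "cR L ` Psi L T1 T2 - {{}} \<subseteq> T2" using PsiD by blast
  show "T2 \<subseteq> cR L ` Psi L T1 T2 - {{}}"
  proof
    fix B assume B: "B \<in> T2"
    then obtain S where "S \<in> Psi L T1 T2" "cR L S = B" using P5' by blast
    then show "B \<in> cR L ` Psi L T1 T2 - {{}}" using T2_props(3)[OF T2 B] by blast
  qed
qed

end
end

definition hs :: "(int \<times> int) set set \<Rightarrow> nat" where
  "hs T = (\<Sum>\<eta>\<in>T. halflen \<eta>)"

lemma TDr_finite: "finite X \<Longrightarrow> T \<in> TDr X \<Longrightarrow> finite T"
  by (rule finite_subset[of T "Pow X"]) (use TDr_sub in blast, simp)

lemma hs_card: assumes X: "finite X" and T: "T \<in> TDr X"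
  shows "4 * hs T = card (\<Union>T)" "\<Union>T \<subseteq> X"
proof -
  have fT: "finite T" using TDr_finite[OF X T] .
  have "4 * hs T = (\<Sum>\<eta>\<in>T. 4 * halflen \<eta>)" unfolding hs_def by (simp add: sum_distrib_left)
  also have "\<dots> = (\<Sum>\<eta>\<in>T. card \<eta>)" using halflen_tt TDr_tile[OF T] by (intro sum.cong) auto
  also have "\<dots> = card (\<Union>T)"
  proof (rule card_Union_disjoint[symmetric])
    show "pairwise disjnt T" unfolding pairwise_def disjnt_def using TDr_disj[OF T] by blast
    show "\<And>A. A \<in> T \<Longrightarrow> finite A" using TDr_sub[OF T] X finite_subset by blast
  qed
  finally show "4 * hs T = card (\<Union>T)" .
  show "\<Union>T \<subseteq> X" using TDr_sub[OF T] by blast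
qed

lemma Union_cL: "\<Union>(cL L ` T - {{}}) = cL L (\<Union>T)" by (auto simp: cL_def)
lemma Union_cR: "\<Union>(cR L ` T - {{}}) = cR L (\<Union>T)" by (auto simp: cR_def)

lemma card_split: "finite S \<Longrightarrow> card S = card (cL L S) + card (cR L S)"
proof -
  assume f: "finite S"
  have "card (cL L S \<union> cR L S) = card (cL L S) + card (cR L S)"
    by (rule card_Un_disjoint) (use f in \<open>auto simp: cL_def cR_def\<close>)
  then show ?thesis using cL_cR by metis
qed

lemma PsiE1: "S \<in> Psi L T1 T2 \<Longrightarrow> S \<noteq> {}" unfolding Psi_def by simp
lemma PsiE2: "S \<in> Psi L T1 T2 \<Longrightarrow> cL L S \<noteq> {} \<Longrightarrow> cL L S \<in> T1" unfolding Psi_def by simp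
lemma PsiE3: "S \<in> Psi L T1 T2 \<Longrightarrow> cR L S \<noteq> {} \<Longrightarrow> cR L S \<in> T2" unfolding Psi_def by simp
lemma PsiE4: "S \<in> Psi L T1 T2 \<Longrightarrow> cL L S \<noteq> {} \<Longrightarrow> cR L S \<noteq> {} \<Longrightarrow> mt L (cL L S) (cR L S)" unfolding Psi_def by simp
lemma PsiE5: "S \<in> Psi L T1 T2 \<Longrightarrow> cL L S \<noteq> {} \<Longrightarrow> cR L S = {} \<Longrightarrow> B \<in> T2 \<Longrightarrow> \<not> mt L (cL L S) B" unfolding Psi_def by simp
lemma PsiE6: "S \<in> Psi L T1 T2 \<Longrightarrow> cL L S = {} \<Longrightarrow> cR L S \<noteq> {} \<Longrightarrow> A \<in> T1 \<Longrightarrow> \<not> mt L A (cR L S)" unfolding Psi_def by simp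
lemma PsiI: "S \<noteq> {} \<Longrightarrow> (cL L S \<noteq> {} \<Longrightarrow> cL L S \<in> T1) \<Longrightarrow> (cR L S \<noteq> {} \<Longrightarrow> cR L S \<in> T2)
  \<Longrightarrow> (cL L S \<noteq> {} \<Longrightarrow> cR L S \<noteq> {} \<Longrightarrow> mt L (cL L S) (cR L S))
  \<Longrightarrow> (\<And>B. cL L S \<noteq> {} \<Longrightarrow> cR L S = {} \<Longrightarrow> B \<in> T2 \<Longrightarrow> \<not> mt L (cL L S) B)
  \<Longrightarrow> (\<And>A. cL L S = {} \<Longrightarrow> cR L S \<noteq> {} \<Longrightarrow> A \<in> T1 \<Longrightarrow> \<not> mt L A (cR L S))
  \<Longrightarrow> S \<in> Psi L T1 T2" unfolding Psi_def by blast

context cutR begin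

lemma Psi_Phi:
  assumes T: "T \<in> TDr R"
  shows "Psi L (cL L ` T - {{}}) (cR L ` T - {{}}) = T"
proof
  show "T \<subseteq> Psi L (cL L ` T - {{}}) (cR L ` T - {{}})"
  proof
    fix \<eta> assume h: "\<eta> \<in> T"
    have ne: "\<eta> \<noteq> {}" using tile_nonempty TDr_tile[OF T h] by blast
    have c1: "cL L \<eta> \<noteq> {} \<longrightarrow> cR L \<eta> = {} \<longrightarrow> (\<forall>B\<in>cR L ` T - {{}}. \<not> mt L (cL L \<eta>) B)"
    proof (intro impI ballI notI)
      fix B assume a: "cL L \<eta> \<noteq> {}" "cR L \<eta> = {}" "B \<in> cR L ` T - {{}}" "mt L (cL L \<eta>) B"
      then obtain \<eta>' where e: "\<eta>' \<in> T" "B = cR L \<eta>'" "B \<noteq> {}" by blast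
      obtain v where v: "odd (L + v)" "(L - 1, v) \<in> cL L \<eta>" "(L, v) \<in> B" using a(4) unfolding mt_def by blast
      have "\<eta> = \<eta>'" using TDr_adj[OF T h e(1) v(1)] v(2,3) e(2) cL_sub cR_sub by blast
      then show False using a(2) e by simp
    qed
    have c2: "cL L \<eta> = {} \<longrightarrow> cR L \<eta> \<noteq> {} \<longrightarrow> (\<forall>A\<in>cL L ` T - {{}}. \<not> mt L A (cR L \<eta>))"
    proof (intro impI ballI notI)
      fix A assume a: "cL L \<eta> = {}" "cR L \<eta> \<noteq> {}" "A \<in> cL L ` T - {{}}" "mt L A (cR L \<eta>)"
      then obtain \<eta>' where e: "\<eta>' \<in> T" "A = cL L \<eta>'" "A \<noteq> {}" by blast
      obtain v where v: "odd (L + v)" "(L - 1, v) \<in> A" "(L, v) \<in> cR L \<eta>" using a(4) unfolding mt_def by blast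
      have "\<eta>' = \<eta>" using TDr_adj[OF T e(1) h v(1)] v(2,3) e(2) cL_sub cR_sub by blast
      then show False using a(1) e by simp
    qed
    have c3: "cL L \<eta> \<noteq> {} \<longrightarrow> cR L \<eta> \<noteq> {} \<longrightarrow> mt L (cL L \<eta>) (cR L \<eta>)"
      using cut_tiles(3)[OF T h] by blast
    show "\<eta> \<in> Psi L (cL L ` T - {{}}) (cR L ` T - {{}})"
    proof (rule PsiI)
      show "\<eta> \<noteq> {}" by (rule ne)
      show "cL L \<eta> \<in> cL L ` T - {{}}" if "cL L \<eta> \<noteq> {}" using that h by blast
      show "cR L \<eta> \<in> cR L ` T - {{}}" if "cR L \<eta> \<noteq> {}" using that h by blast
    qed (use c1 c2 c3 in blast)+
  qed
  show "Psi L (cL L ` T - {{}}) (cR L ` T - {{}}) \<subseteq> T"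
  proof
    fix S assume S: "S \<in> Psi L (cL L ` T - {{}}) (cR L ` T - {{}})"
    have e: "S = cL L S \<union> cR L S" using cL_cR by metis
    have "S \<noteq> {}" using PsiE1[OF S] .
    then consider (l) "cL L S \<noteq> {}" "cR L S = {}" | (r) "cL L S = {}" "cR L S \<noteq> {}" | (b) "cL L S \<noteq> {}" "cR L S \<noteq> {}"
      using e by blast
    then show "S \<in> T"
    proof cases
      case l
      then obtain \<eta> where h: "\<eta> \<in> T" "cL L S = cL L \<eta>" using PsiE2[OF S] by blast
      have nm: "\<forall>B\<in>cR L ` T - {{}}. \<not> mt L (cL L S) B" using PsiE5[OF S] l by blast
      have "cR L \<eta> = {}"
      proof (rule ccontr)
        assume a: "cR L \<eta> \<noteq> {}"
        then have "mt L (cL L \<eta>) (cR L \<eta>)" using cut_tiles(3)[OF T h(1)] l h(2) by simp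
        moreover have "cR L \<eta> \<in> cR L ` T - {{}}" using h(1) a by blast
        ultimately show False using nm h(2) by auto
      qed
      then have "S = \<eta>" using e l h(2) cL_cR[of L \<eta>] by simp
      then show ?thesis using h by simp
    next
      case r
      then obtain \<eta> where h: "\<eta> \<in> T" "cR L S = cR L \<eta>" using PsiE3[OF S] by blast
      have nm: "\<forall>A\<in>cL L ` T - {{}}. \<not> mt L A (cR L S)" using PsiE6[OF S] r by blast
      have "cL L \<eta> = {}"
      proof (rule ccontr)
        assume a: "cL L \<eta> \<noteq> {}"
        then have "mt L (cL L \<eta>) (cR L \<eta>)" using cut_tiles(3)[OF T h(1)] r h(2) by simp
        moreover have "cL L \<eta> \<in> cL L ` T - {{}}" using h(1) a by blast
        ultimately show False using nm h(2) by auto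
      qed
      then have "S = \<eta>" using e r h(2) cL_cR[of L \<eta>] by simp
      then show ?thesis using h by simp
    next
      case b
      then obtain \<eta> \<eta>' where h: "\<eta> \<in> T" "cL L S = cL L \<eta>" "\<eta>' \<in> T" "cR L S = cR L \<eta>'" using PsiE2[OF S] PsiE3[OF S] by blast
      have "mt L (cL L S) (cR L S)" using PsiE4[OF S] b by blast
      then obtain v where v: "odd (L + v)" "(L - 1, v) \<in> cL L \<eta>" "(L, v) \<in> cR L \<eta>'" using h unfolding mt_def by auto
      have "\<eta> = \<eta>'" using TDr_adj[OF T h(1) h(3) v(1)] v(2,3) cL_sub cR_sub by blast
      then have "S = \<eta>" using e h cL_cR[of L \<eta>] by simp
      then show ?thesis using h by simp
    qed
  qed
qed

lemma Phi_bij: "bij_betw (\<lambda>T. (cL L ` T - {{}}, cR L ` T - {{}})) (TDr R) (TDr (cL L R) \<times> TDr (cR L R))"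
proof (rule bij_betw_byWitness[where f' = "\<lambda>(T1, T2). Psi L T1 T2"])
  show "\<forall>a\<in>TDr R. (\<lambda>(T1, T2). Psi L T1 T2) (cL L ` a - {{}}, cR L ` a - {{}}) = a"
    using Psi_Phi by simp
  show "\<forall>a'\<in>TDr (cL L R) \<times> TDr (cR L R). (\<lambda>T. (cL L ` T - {{}}, cR L ` T - {{}})) ((\<lambda>(T1, T2). Psi L T1 T2) a') = a'"
    using Phi_Psi1 Phi_Psi2 by auto
  show "(\<lambda>T. (cL L ` T - {{}}, cR L ` T - {{}})) ` TDr R \<subseteq> TDr (cL L R) \<times> TDr (cR L R)"
    using phi1_valid phi2_valid by auto
  show "(\<lambda>(T1, T2). Psi L T1 T2) ` (TDr (cL L R) \<times> TDr (cR L R)) \<subseteq> TDr R"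
    using Psi_valid by auto
qed

lemma core_sum:
  fixes t :: "'a::comm_semiring_1"
  assumes fin: "finite R"
  shows "(\<Sum>T\<in>TDr R. t ^ (card R - 2 * hs T))
       = (\<Sum>T\<in>TDr (cL L R). t ^ (card (cL L R) - 2 * hs T)) * (\<Sum>T\<in>TDr (cR L R). t ^ (card (cR L R) - 2 * hs T))"
proof -
  let ?f = "\<lambda>T. (cL L ` T - {{}}, cR L ` T - {{}})"
  let ?g = "\<lambda>(T1, T2). t ^ (card (cL L R) - 2 * hs T1) * t ^ (card (cR L R) - 2 * hs T2)"
  have w: "t ^ (card R - 2 * hs T) = ?g (?f T)" if T: "T \<in> TDr R" for T
  proof -
    have T1: "cL L ` T - {{}} \<in> TDr (cL L R)" using phi1_valid[OF T] .
    have T2: "cR L ` T - {{}} \<in> TDr (cR L R)" using phi2_valid[OF T] .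
    have f1: "finite (cL L R)" "finite (cR L R)" using fin by (auto simp: cL_def cR_def)
    note h0 = hs_card[OF fin T] note h1 = hs_card[OF f1(1) T1] note h2 = hs_card[OF f1(2) T2]
    have fU: "finite (\<Union>T)" using h0(2) fin finite_subset by blast
    have cU: "card (\<Union>T) = card (\<Union>(cL L ` T - {{}})) + card (\<Union>(cR L ` T - {{}}))"
      unfolding Union_cL Union_cR using card_split[OF fU] .
    have cR': "card R = card (cL L R) + card (cR L R)" using card_split[OF fin] .
    have le1: "card (\<Union>(cL L ` T - {{}})) \<le> card (cL L R)" using h1(2) f1(1) card_mono by blast
    have le2: "card (\<Union>(cR L ` T - {{}})) \<le> card (cR L R)" using h2(2) f1(2) card_mono by blast
    have "card R - 2 * hs T = (card (cL L R) - 2 * hs (cL L ` T - {{}})) + (card (cR L R) - 2 * hs (cR L ` T - {{}}))"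
      using h0(1) h1(1) h2(1) cU cR' le1 le2 by linarith
    then show ?thesis by (simp add: power_add)
  qed
  have "(\<Sum>T\<in>TDr R. t ^ (card R - 2 * hs T)) = (\<Sum>T\<in>TDr R. ?g (?f T))"
    using w by (rule sum.cong[OF refl])
  also have "\<dots> = sum ?g (TDr (cL L R) \<times> TDr (cR L R))"
    by (rule sum.reindex_bij_betw[OF Phi_bij])
  also have "\<dots> = (\<Sum>T1\<in>TDr (cL L R). \<Sum>T2\<in>TDr (cR L R). t ^ (card (cL L R) - 2 * hs T1) * t ^ (card (cR L R) - 2 * hs T2))"
    by (rule sum.cartesian_product[symmetric])
  also have "\<dots> = (\<Sum>T\<in>TDr (cL L R). t ^ (card (cL L R) - 2 * hs T)) * (\<Sum>T\<in>TDr (cR L R). t ^ (card (cR L R) - 2 * hs T))"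
    by (rule sum_product[symmetric])
  finally show ?thesis .
qed

end

lemma trs_inj: "inj (trs d)"
proof (rule injI)
  fix A B assume e: "trs d A = trs d B"
  show "A = B"
  proof (rule set_eqI, clarify)
    fix k v
    have "(k, v) \<in> A \<longleftrightarrow> (k + d, v) \<in> trs d A" by (simp add: mem_trs)
    also have "\<dots> \<longleftrightarrow> (k + d, v) \<in> trs d B" using e by simp
    also have "\<dots> \<longleftrightarrow> (k, v) \<in> B" by (simp add: mem_trs)
    finally show "(k, v) \<in> A \<longleftrightarrow> (k, v) \<in> B" .
  qed
qed

lemma trs_Int: "trs d (A \<inter> B) = trs d A \<inter> trs d B"
  by (auto simp: set_eq_iff mem_trs)
lemma trs_mono: "A \<subseteq> B \<Longrightarrow> trs d A \<subseteq> trs d B"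
  unfolding trs_def by blast
lemma trs_empty: "trs d A = {} \<longleftrightarrow> A = {}" unfolding trs_def by blast
lemma shift_trs: "shift (trs d A) = trs d (shift A)"
  by (auto simp: set_eq_iff mem_trs mem_shift)
lemma trs_trs: "trs e (trs d A) = trs (d + e) A"
  by (auto simp: set_eq_iff mem_trs algebra_simps)
lemma trs_0: "trs 0 A = A" by (auto simp: set_eq_iff mem_trs)
lemma border_trs: "even d \<Longrightarrow> border (trs d S) u v \<longleftrightarrow> border S (u - d) v"
  unfolding border_def mem_trs by (auto simp: algebra_simps)
lemma card_trs: "card (trs d A) = card A"
  unfolding trs_def by (rule card_image) (auto simp: inj_on_def)
lemma trs_tile: "even d \<Longrightarrow> is_trunc_tile S \<Longrightarrow> is_trunc_tile (trs d S)"
proof -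
  assume d: "even d" and "is_trunc_tile S"
  then obtain k0 v0 ws where p: "odd (k0 + v0)" "dyck ws" "ws \<noteq> []" "S = tt k0 v0 ws" unfolding is_trunc_tile_tt by blast
  have "odd (k0 + d + v0)" using p(1) d by presburger
  then show ?thesis unfolding is_trunc_tile_tt p(4) trs_tt using p by blast
qed

lemma TDr_trs:
  assumes d: "even d" and T: "T \<in> TDr X"
  shows "trs d ` T \<in> TDr (trs d X)"
proof (rule TDr_I)
  show "\<forall>\<eta>\<in>trs d ` T. is_trunc_tile \<eta> \<and> \<eta> \<subseteq> trs d X"
  proof
    fix a assume "a \<in> trs d ` T"
    then obtain x where x: "x \<in> T" "a = trs d x" by blast
    show "is_trunc_tile a \<and> a \<subseteq> trs d X"
      using trs_tile[OF d TDr_tile[OF T x(1)]] trs_mono[OF TDr_sub[OF T x(1)]] x(2) by simp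
  qed
  show "\<forall>\<eta>1\<in>trs d ` T. \<forall>\<eta>2\<in>trs d ` T. \<eta>1 \<noteq> \<eta>2 \<longrightarrow> \<eta>1 \<inter> \<eta>2 = {}"
  proof (intro ballI impI)
    fix a b assume "a \<in> trs d ` T" "b \<in> trs d ` T" "a \<noteq> b"
    then obtain x y where xy: "x \<in> T" "y \<in> T" "a = trs d x" "b = trs d y" "x \<noteq> y" by blast
    then have "x \<inter> y = {}" using TDr_disj[OF T] by blast
    then show "a \<inter> b = {}" using xy(3,4) trs_Int[of d x y] by (simp add: trs_def)
  qed
  show "\<forall>\<eta>\<in>trs d ` T. shift \<eta> \<inter> trs d X \<noteq> {} \<longrightarrow> (\<exists>\<eta>'\<in>trs d ` T. \<eta>' \<noteq> \<eta> \<and> shift \<eta> \<subseteq> \<eta>')"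
  proof (intro ballI impI)
    fix a assume a: "a \<in> trs d ` T" and s: "shift a \<inter> trs d X \<noteq> {}"
    then obtain x where x: "x \<in> T" "a = trs d x" by blast
    have "trs d (shift x \<inter> X) \<noteq> {}" using s x(2) by (simp add: shift_trs trs_Int)
    then have "shift x \<inter> X \<noteq> {}" using trs_empty by blast
    then obtain y where y: "y \<in> T" "y \<noteq> x" "shift x \<subseteq> y" using TDr_shift[OF T x(1)] by blast
    have "trs d y \<noteq> a" using y(2) x(2) inj_eq[OF trs_inj] by simp
    moreover have "shift a \<subseteq> trs d y" using y(3) x(2) by (simp add: shift_trs trs_mono)
    ultimately show "\<exists>\<eta>'\<in>trs d ` T. \<eta>' \<noteq> a \<and> shift a \<subseteq> \<eta>'" using y(1) by blast
  qed
  show "\<forall>\<eta>1\<in>trs d ` T. \<forall>\<eta>2\<in>trs d ` T. \<eta>1 \<noteq> \<eta>2 \<longrightarrow> \<not> (\<exists>u v. border \<eta>1 u v \<and> border \<eta>2 u v)"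
  proof (intro ballI impI notI)
    fix a b assume "a \<in> trs d ` T" "b \<in> trs d ` T" "a \<noteq> b" and "\<exists>u v. border a u v \<and> border b u v"
    then obtain x y u v where xy: "x \<in> T" "y \<in> T" "a = trs d x" "b = trs d y" "x \<noteq> y" "border a u v" "border b u v" by blast
    then have "border x (u - d) v" "border y (u - d) v" using border_trs[OF d] by auto
    then show False using TDr_border[OF T xy(1,2)] xy(5) by blast
  qed
qed

lemma TDr_trs_eq:
  assumes d: "even d"
  shows "TDr (trs d X) = (image (trs d)) ` TDr X"
proof
  show "(image (trs d)) ` TDr X \<subseteq> TDr (trs d X)" using TDr_trs[OF d] by blast
  show "TDr (trs d X) \<subseteq> (image (trs d)) ` TDr X"
  proof
    fix T assume T: "T \<in> TDr (trs d X)"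
    have d': "even (- d)" using d by simp
    have 1: "trs (- d) ` T \<in> TDr X" using TDr_trs[OF d' T] by (simp add: trs_trs trs_0)
    have "trs d ` (trs (- d) ` T) = T" by (simp add: image_image trs_trs trs_0)
    then show "T \<in> (image (trs d)) ` TDr X" using 1 by (metis imageI)
  qed
qed

lemma hs_trs: assumes d: "even d" and T: "T \<in> TDr X" shows "hs (trs d ` T) = hs T"
proof -
  have "hs (trs d ` T) = (\<Sum>\<eta>\<in>T. halflen (trs d \<eta>))"
    unfolding hs_def using sum.reindex[of "trs d" T halflen] inj_on_subset[OF trs_inj subset_UNIV] by (simp add: comp_def)
  also have "\<dots> = hs T" unfolding hs_def
  proof (rule sum.cong[OF refl])
    fix \<eta> assume h: "\<eta> \<in> T"
    have "4 * halflen (trs d \<eta>) = 4 * halflen \<eta>"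
      using halflen_tt[OF trs_tile[OF d TDr_tile[OF T h]]] halflen_tt[OF TDr_tile[OF T h]] card_trs by simp
    then show "halflen (trs d \<eta>) = halflen \<eta>" by simp
  qed
  finally show ?thesis .
qed

lemma sum_trs:
  fixes t :: "'a::comm_semiring_1"
  assumes d: "even d"
  shows "(\<Sum>T\<in>TDr (trs d X). t ^ (card (trs d X) - 2 * hs T)) = (\<Sum>T\<in>TDr X. t ^ (card X - 2 * hs T))"
proof -
  have inj: "inj_on (image (trs d)) (TDr X)" by (rule inj_on_image) (rule inj_on_subset[OF trs_inj subset_UNIV])
  have "(\<Sum>T\<in>TDr (trs d X). t ^ (card (trs d X) - 2 * hs T)) = (\<Sum>T\<in>TDr X. t ^ (card (trs d X) - 2 * hs (trs d ` T)))"
    unfolding TDr_trs_eq[OF d] by (rule sum.reindex[OF inj, unfolded comp_def])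
  also have "\<dots> = (\<Sum>T\<in>TDr X. t ^ (card X - 2 * hs T))"
    by (rule sum.cong[OF refl]) (simp add: card_trs hs_trs[OF d])
  finally show ?thesis .
qed

lemma vh_le: "vh v0 ws j \<le> v0 + int j"
proof (induction j)
  case 0 then show ?case by simp
next
  case (Suc j)
  show ?case
  proof (cases "j < length ws")
    case True then show ?thesis using Suc vh_Suc[OF True, of v0] by auto
  next
    case False then show ?thesis using Suc vh_ge[of ws j v0] vh_ge[of ws "Suc j" v0] by simp
  qed
qed

lemma region_mem: "(k, v) \<in> region lam mu a \<longleftrightarrow> 0 \<le> k \<and> k < int (length lam)
      \<and> min (vh 0 lam (nat k)) (vh 0 lam (nat k + 1)) < v
      \<and> v < max (vh (2 * int a) mu (nat k)) (vh (2 * int a) mu (nat k + 1))"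
  by (simp add: region_def)

lemma finite_region: "finite (region lam mu a)"
proof (rule finite_subset)
  show "region lam mu a \<subseteq> (SIGMA k:{0..<int (length lam)}. {min (vh 0 lam (nat k)) (vh 0 lam (nat k + 1))<..<max (vh (2 * int a) mu (nat k)) (vh (2 * int a) mu (nat k + 1))})"
    by (auto simp: region_mem)
  show "finite (SIGMA k:{0..<int (length lam)}. {min (vh 0 lam (nat k)) (vh 0 lam (nat k + 1))<..<max (vh (2 * int a) mu (nat k)) (vh (2 * int a) mu (nat k + 1))})"
    by (rule finite_SigmaI) auto
qed

lemma region_cL:
  assumes "length m1 = length l1"
  shows "cL (int (length l1)) (region (l1 @ l2) (m1 @ m2) a) = region l1 m1 a"
proof (rule set_eqI, clarify)
  fix k v
  show "(k, v) \<in> cL (int (length l1)) (region (l1 @ l2) (m1 @ m2) a) \<longleftrightarrow> (k, v) \<in> region l1 m1 a"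
  proof (cases "0 \<le> k \<and> k < int (length l1)")
    case True
    then have "nat k + 1 \<le> length l1" "nat k \<le> length l1" by auto
    then show ?thesis unfolding mem_cL region_mem using True assms by (simp add: vh_append_le)
  next
    case False
    then show ?thesis unfolding mem_cL region_mem by auto
  qed
qed

lemma region_cR:
  assumes d1: "dyck l1" and len: "length m1 = length l1" and hi: "vh (2 * int a) m1 (length l1) = 2 * int i"
  shows "cR (int (length l1)) (region (l1 @ l2) (m1 @ m2) a) = trs (int (length l1)) (region l2 m2 i)"
proof (rule set_eqI, clarify)
  fix k v
  let ?L = "int (length l1)"
  show "(k, v) \<in> cR ?L (region (l1 @ l2) (m1 @ m2) a) \<longleftrightarrow> (k, v) \<in> trs ?L (region l2 m2 i)"
  proof (cases "?L \<le> k")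
    case True
    define j where "j = nat (k - ?L)"
    have e: "nat k = length l1 + j" "nat k + 1 = length l1 + (j + 1)" "nat (k - ?L) = j" using True unfolding j_def by auto
    have l: "vh 0 (l1 @ l2) (length l1 + x) = vh 0 l2 x" for x
      using vh_append_ge[of 0 l1 l2 x] dyck_end[OF d1] by simp
    have m: "vh (2 * int a) (m1 @ m2) (length l1 + x) = vh (2 * int i) m2 x" for x
      using vh_append_ge[of "2 * int a" m1 m2 x] hi len by simp
    have l': "vh 0 (l1 @ l2) (Suc (length l1 + j)) = vh 0 l2 (Suc j)" using l[of "Suc j"] by simp
    have m': "vh (2 * int a) (m1 @ m2) (Suc (length l1 + j)) = vh (2 * int i) m2 (Suc j)" using m[of "Suc j"] by simp
    show ?thesis unfolding mem_cR mem_trs region_mem e l m using True l' m' by auto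
  next
    case False
    then show ?thesis unfolding mem_cR mem_trs region_mem by auto
  qed
qed

lemma cutR_region:
  assumes d1: "dyck l1" and d2: "dyck l2"
  shows "cutR (int (length l1)) (region (l1 @ l2) mu a)"
proof
  have dl: "dyck (l1 @ l2)" using dyck_append[OF d1 d2] .
  have z: "vh 0 (l1 @ l2) (length l1) = 0" using vh_append_le[of "length l1" l1 0 l2] dyck_end[OF d1] by simp
  show "even (int (length l1))" using dyck_even[OF d1] by simp
  show "1 \<le> v" if "(k, v) \<in> region (l1 @ l2) mu a" for k v
    using that dyck_nonneg[OF dl, of "nat k"] dyck_nonneg[OF dl, of "nat k + 1"] unfolding region_mem by linarith
  show "(int (length l1) - 1, v') \<in> region (l1 @ l2) mu a"
    if h: "(int (length l1) - 1, v) \<in> region (l1 @ l2) mu a" "1 \<le> v'" "v' \<le> v" for v v'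
  proof -
    have "0 \<le> int (length l1) - 1" using h(1) unfolding region_mem by blast
    then have k: "1 \<le> length l1" by linarith
    have e: "nat (int (length l1) - 1) + 1 = length l1" using k by auto
    show ?thesis using h k z unfolding region_mem e by auto
  qed
  show "(int (length l1), v') \<in> region (l1 @ l2) mu a"
    if h: "(int (length l1), v) \<in> region (l1 @ l2) mu a" "1 \<le> v'" "v' \<le> v" for v v'
    using h z unfolding region_mem by auto
qed

lemma Lpaths_mem: "mu \<in> Lpaths lam a b \<longleftrightarrow> length mu = length lam \<and> vh (2 * int a) mu (length mu) = 2 * int b
      \<and> (\<forall>j \<le> length lam. vh 0 lam j \<le> vh (2 * int a) mu j)"
  by (simp add: Lpaths_def)

lemma finite_Lpaths: "finite (Lpaths lam a b)"
proof (rule finite_subset)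
  show "Lpaths lam a b \<subseteq> {xs. set xs \<subseteq> UNIV \<and> length xs = length lam}" by (auto simp: Lpaths_mem)
  show "finite {xs. set xs \<subseteq> (UNIV :: bool set) \<and> length xs = length lam}" by (rule finite_lists_length_eq) simp
qed

lemma Lpaths_bound: "m1 \<in> Lpaths l1 a i \<Longrightarrow> i \<le> a + length l1"
proof -
  assume "m1 \<in> Lpaths l1 a i"
  then have "vh (2 * int a) m1 (length m1) = 2 * int i" "length m1 = length l1" by (auto simp: Lpaths_mem)
  then show ?thesis using vh_le[of "2 * int a" m1 "length m1"] by linarith
qed

lemma Lpaths_bij:
  assumes d1: "dyck l1" and d2: "dyck l2"
  shows "bij_betw (\<lambda>(i, m1, m2). m1 @ m2) (SIGMA i:{..a + length l1}. Lpaths l1 a i \<times> Lpaths l2 i b) (Lpaths (l1 @ l2) a b)"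
proof (rule bij_betw_byWitness[where f' = "\<lambda>mu. (nat (vh (2 * int a) mu (length l1) div 2), take (length l1) mu, drop (length l1) mu)"])
  let ?L = "length l1"
  have z: "vh 0 l1 ?L = 0" using dyck_end[OF d1] .
  show "\<forall>x\<in>SIGMA i:{..a + ?L}. Lpaths l1 a i \<times> Lpaths l2 i b.
     (\<lambda>mu. (nat (vh (2 * int a) mu ?L div 2), take ?L mu, drop ?L mu)) ((\<lambda>(i, m1, m2). m1 @ m2) x) = x"
  proof
    fix x assume "x \<in> (SIGMA i:{..a + ?L}. Lpaths l1 a i \<times> Lpaths l2 i b)"
    then obtain i m1 m2 where x: "x = (i, m1, m2)" and h: "m1 \<in> Lpaths l1 a i" "m2 \<in> Lpaths l2 i b" by auto
    then have l: "length m1 = ?L" "vh (2 * int a) m1 ?L = 2 * int i" by (auto simp: Lpaths_mem)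
    have "vh (2 * int a) (m1 @ m2) ?L = 2 * int i" using vh_append_le[of ?L m1 "2 * int a" m2] l by simp
    then show "(\<lambda>mu. (nat (vh (2 * int a) mu ?L div 2), take ?L mu, drop ?L mu)) ((\<lambda>(i, m1, m2). m1 @ m2) x) = x"
      using l x by simp
  qed
  show "\<forall>mu\<in>Lpaths (l1 @ l2) a b. (\<lambda>(i, m1, m2). m1 @ m2)
     ((\<lambda>mu. (nat (vh (2 * int a) mu ?L div 2), take ?L mu, drop ?L mu)) mu) = mu" by simp
  show "(\<lambda>(i, m1, m2). m1 @ m2) ` (SIGMA i:{..a + ?L}. Lpaths l1 a i \<times> Lpaths l2 i b) \<subseteq> Lpaths (l1 @ l2) a b"
  proof
    fix y assume "y \<in> (\<lambda>(i, m1, m2). m1 @ m2) ` (SIGMA i:{..a + ?L}. Lpaths l1 a i \<times> Lpaths l2 i b)"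
    then obtain i m1 m2 where y: "y = m1 @ m2" and h: "m1 \<in> Lpaths l1 a i" "m2 \<in> Lpaths l2 i b" by auto
    then have l: "length m1 = ?L" "vh (2 * int a) m1 ?L = 2 * int i" "\<forall>j \<le> ?L. vh 0 l1 j \<le> vh (2 * int a) m1 j"
      and r: "length m2 = length l2" "vh (2 * int i) m2 (length l2) = 2 * int b" "\<forall>j \<le> length l2. vh 0 l2 j \<le> vh (2 * int i) m2 j"
      by (auto simp: Lpaths_mem)
    have len: "length (m1 @ m2) = length (l1 @ l2)" using l r by simp
    have en: "vh (2 * int a) (m1 @ m2) (length (m1 @ m2)) = 2 * int b"
      using vh_append_ge[of "2 * int a" m1 m2 "length m2"] l r by simp
    have ab: "vh 0 (l1 @ l2) j \<le> vh (2 * int a) (m1 @ m2) j" if j: "j \<le> length (l1 @ l2)" for j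
    proof (cases "j \<le> ?L")
      case True then show ?thesis using l vh_append_le[of j l1 0 l2] vh_append_le[of j m1 "2 * int a" m2] by simp
    next
      case False
      then obtain j' where j': "j = ?L + j'" "j' \<le> length l2" using j by (metis add.commute le_add_diff_inverse2 length_append nat_le_linear add_le_cancel_right)
      show ?thesis using j' r l z vh_append_ge[of 0 l1 l2 j'] vh_append_ge[of "2 * int a" m1 m2 j'] by simp
    qed
    show "y \<in> Lpaths (l1 @ l2) a b" unfolding y Lpaths_mem using len en ab by simp
  qed
  show "(\<lambda>mu. (nat (vh (2 * int a) mu ?L div 2), take ?L mu, drop ?L mu)) ` Lpaths (l1 @ l2) a b
     \<subseteq> (SIGMA i:{..a + ?L}. Lpaths l1 a i \<times> Lpaths l2 i b)"
  proof
    fix y assume "y \<in> (\<lambda>mu. (nat (vh (2 * int a) mu ?L div 2), take ?L mu, drop ?L mu)) ` Lpaths (l1 @ l2) a b"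
    then obtain mu where y: "y = (nat (vh (2 * int a) mu ?L div 2), take ?L mu, drop ?L mu)" and h: "mu \<in> Lpaths (l1 @ l2) a b" by blast
    then have len: "length mu = ?L + length l2" and en: "vh (2 * int a) mu (length mu) = 2 * int b"
      and ab: "\<forall>j \<le> ?L + length l2. vh 0 (l1 @ l2) j \<le> vh (2 * int a) mu j" by (auto simp: Lpaths_mem)
    define h0 where "h0 = vh (2 * int a) mu ?L"
    define i where "i = nat (h0 div 2)"
    have "vh 0 (l1 @ l2) ?L = 0" using vh_append_le[of ?L l1 0 l2] z by simp
    then have hpos: "0 \<le> h0" using ab unfolding h0_def by (metis le_add1)
    have "even (h0 - 2 * int a - int ?L)" unfolding h0_def by (rule vh_parity) (use len in simp)
    then have "even h0" using dyck_even[OF d1] by presburger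
    then have hi: "h0 = 2 * int i" unfolding i_def using hpos by auto
    have m1: "take ?L mu \<in> Lpaths l1 a i"
    proof -
      have "vh (2 * int a) (take ?L mu) ?L = 2 * int i" using hi unfolding h0_def by (simp add: vh_take)
      moreover have "vh 0 l1 j \<le> vh (2 * int a) (take ?L mu) j" if "j \<le> ?L" for j
        using ab[rule_format, of j] that vh_append_le[of j l1 0 l2] vh_take[OF that, of "2 * int a" mu] by simp
      ultimately show ?thesis unfolding Lpaths_mem using len by simp
    qed
    have m2: "drop ?L mu \<in> Lpaths l2 i b"
    proof -
      have dr: "vh (2 * int i) (drop ?L mu) j = vh (2 * int a) mu (?L + j)" for j
        using vh_drop[of ?L mu "2 * int a" j] len hi unfolding h0_def by simp
      have "vh (2 * int i) (drop ?L mu) (length (drop ?L mu)) = 2 * int b" using dr en len by simp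
      moreover have "vh 0 l2 j \<le> vh (2 * int i) (drop ?L mu) j" if "j \<le> length l2" for j
        using ab[rule_format, of "?L + j"] that vh_append_ge[of 0 l1 l2 j] z dr by simp
      ultimately show ?thesis unfolding Lpaths_mem using len by simp
    qed
    have "i \<le> a + ?L" using Lpaths_bound[OF m1] .
    then show "y \<in> (SIGMA i:{..a + ?L}. Lpaths l1 a i \<times> Lpaths l2 i b)"
      using m1 m2 unfolding y i_def h0_def by simp
  qed
qed

definition FF :: "'a::comm_semiring_1 \<Rightarrow> bool list \<Rightarrow> nat \<Rightarrow> bool list \<Rightarrow> 'a" where
  "FF t lam a mu = (\<Sum>T\<in>TDr (region lam mu a). t ^ (card (region lam mu a) - 2 * hs T))"

lemma Bq_FF: "Bq t lam a b = (\<Sum>mu\<in>Lpaths lam a b. FF t lam a mu)"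
  unfolding Bq_def FF_def TD_TDr hs_def ..

lemma FF_split:
  fixes t :: "'a::comm_semiring_1"
  assumes d1: "dyck l1" and d2: "dyck l2" and m1: "m1 \<in> Lpaths l1 a i" and m2: "m2 \<in> Lpaths l2 i b"
  shows "FF t (l1 @ l2) a (m1 @ m2) = FF t l1 a m1 * FF t l2 i m2"
proof -
  have l: "length m1 = length l1" "vh (2 * int a) m1 (length l1) = 2 * int i" using m1 by (auto simp: Lpaths_mem)
  interpret cutR "int (length l1)" "region (l1 @ l2) (m1 @ m2) a" using cutR_region[OF d1 d2] .
  have ev: "even (int (length l1))" using dyck_even[OF d1] by simp
  show ?thesis
    unfolding FF_def core_sum[OF finite_region] region_cL[OF l(1)] region_cR[OF d1 l(1) l(2)] sum_trs[OF ev] ..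
qed

theorem lemma3p7:
  fixes t :: "'a::comm_semiring_1" and l1 l2 :: "bool list" and a b :: nat
  assumes "dyck l1" and "dyck l2"
  shows "Bq t (l1 @ l2) a b = Sum_any (\<lambda>i::nat. Bq t l1 a i * Bq t l2 i b)"
proof -
  let ?K = "a + length l1"
  let ?S = "SIGMA i:{..?K}. Lpaths l1 a i \<times> Lpaths l2 i b"
  have "Bq t (l1 @ l2) a b = (\<Sum>mu\<in>Lpaths (l1 @ l2) a b. FF t (l1 @ l2) a mu)" by (rule Bq_FF)
  also have "\<dots> = (\<Sum>x\<in>?S. FF t (l1 @ l2) a ((\<lambda>(i, m1, m2). m1 @ m2) x))"
    by (rule sum.reindex_bij_betw[OF Lpaths_bij[OF assms], symmetric])
  also have "\<dots> = (\<Sum>x\<in>?S. (\<lambda>(i, m1, m2). FF t l1 a m1 * FF t l2 i m2) x)"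
  proof (rule sum.cong[OF refl])
    fix x assume "x \<in> ?S"
    then obtain i m1 m2 where x: "x = (i, m1, m2)" "m1 \<in> Lpaths l1 a i" "m2 \<in> Lpaths l2 i b" by auto
    show "FF t (l1 @ l2) a ((\<lambda>(i, m1, m2). m1 @ m2) x) = (\<lambda>(i, m1, m2). FF t l1 a m1 * FF t l2 i m2) x"
      unfolding x(1) using FF_split[OF assms x(2,3)] by simp
  qed
  also have "\<dots> = (\<Sum>i\<in>{..?K}. \<Sum>p\<in>Lpaths l1 a i \<times> Lpaths l2 i b. (\<lambda>(m1, m2). FF t l1 a m1 * FF t l2 i m2) p)"
    by (subst sum.Sigma) (auto simp: finite_Lpaths intro!: sum.cong)
  also have "\<dots> = (\<Sum>i\<in>{..?K}. Bq t l1 a i * Bq t l2 i b)"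
  proof (rule sum.cong[OF refl])
    fix i
    have "(\<Sum>p\<in>Lpaths l1 a i \<times> Lpaths l2 i b. (\<lambda>(m1, m2). FF t l1 a m1 * FF t l2 i m2) p)
        = (\<Sum>m1\<in>Lpaths l1 a i. \<Sum>m2\<in>Lpaths l2 i b. FF t l1 a m1 * FF t l2 i m2)"
      by (rule sum.cartesian_product[symmetric])
    also have "\<dots> = Bq t l1 a i * Bq t l2 i b" unfolding Bq_FF by (rule sum_product[symmetric])
    finally show "(\<Sum>p\<in>Lpaths l1 a i \<times> Lpaths l2 i b. (\<lambda>(m1, m2). FF t l1 a m1 * FF t l2 i m2) p) = Bq t l1 a i * Bq t l2 i b" .
  qed
  also have "\<dots> = Sum_any (\<lambda>i::nat. Bq t l1 a i * Bq t l2 i b)"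
  proof (rule Sum_any.expand_superset[symmetric])
    show "finite {..?K}" by simp
    show "{i. Bq t l1 a i * Bq t l2 i b \<noteq> 0} \<subseteq> {..?K}"
    proof
      fix i assume "i \<in> {i. Bq t l1 a i * Bq t l2 i b \<noteq> 0}"
      then have "Lpaths l1 a i \<noteq> {}" unfolding Bq_def by auto
      then obtain m1 where "m1 \<in> Lpaths l1 a i" by blast
      then show "i \<in> {..?K}" using Lpaths_bound by simp
    qed
  qed
  finally show ?thesis .
qed

end
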